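(* Fix $\gamma\in(0,1]$ and $0<\alpha<0.25$, and let $\xi>0$ be an arbitrarily small number. Then for all sufficiently large $N$, $$\mathbb E\big[\|S-s^*\|^2\big]\le\frac{1}{N^{1-4\alpha-7\xi}}.$$
   Context: Model. Let $N\ge1$ be the number of servers, $\gamma\in(0,1]$ and $\alpha>0$ constants, and $\lambda=1-\gamma/N^{\alpha}$. Let $b=b(N)\ge1$ be an integer buffer size with $b=O(\log N)$. Each of the $N$ servers holds at most $b$ jobs; jobs arrive as a Poisson process of rate $\lambda N$, service times are i.i.d. exponential with rate $1$, and each arriving job samples two servers uniformly at random and joins the one with fewer jobs (ties broken uniformly). Let $S_i(t)$ be the fraction of servers with at least $i$ jobs; $S(t)=(S_1(t),\dots,S_b(t))$ is a continuous-time Markov chain on $\{s\in\{0,\frac1N,\dots,1\}^b:1\ge s_1\ge\cdots\ge s_b\ge0\}$ with, using $s_0=1$, $s_{b+1}=0$ and $e_k$ the $k$-th unit vector, transitions $s\to s+e_k/N$ at rate $\lambda N(s_{k-1}^2-s_k^2)$ and $s\to s-e_k/N$ at rate $N(s_k-s_{k+1})$. $S$ denotes a random vector with the stationary distribution of this chain. $s^*$ is the unique point of $\mathcal S=\{s\in\mathbb R^b:1\ge s_1\ge\cdots\ge s_b\ge0\}$ with $f(s^* )=0$, where $f_k(s)=\lambda(s_{k-1}^2-s_k^2)-(s_k-s_{k+1})$ (with $s_0=1,s_{b+1}=0$). $\|\cdot\|$ is the Euclidean norm. *)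

theory Defs
  imports "HOL-Analysis.Analysis" "HOL-Library.Landau_Symbols"
begin

text \<open>A state is a function nat => real; coordinates 1..b are s_1..s_b, all other
  coordinates are 0.  The boundary conventions s_0 = 1, s_(b+1) = 0 are
  implemented by ext.\<close>

definition ext :: "nat \<Rightarrow> (nat \<Rightarrow> real) \<Rightarrow> nat \<Rightarrow> real" where
  "ext b s k = (if k = 0 then 1 else if k \<le> b then s k else 0)"

definition lam :: "real \<Rightarrow> real \<Rightarrow> nat \<Rightarrow> real" where
  "lam \<gamma> \<alpha> N = 1 - \<gamma> / (real N powr \<alpha>)"

definition simplexS :: "nat \<Rightarrow> (nat \<Rightarrow> real) set" where
  "simplexS b = {s. (\<forall>k. k \<notin> {1..b} \<longrightarrow> s k = 0) \<and>
      (\<forall>k\<in>{1..b}. ext b s k \<le> ext b s (k - 1)) \<and> (\<forall>k\<in>{1..b}. 0 \<le> s k)}"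

definition state_space :: "nat \<Rightarrow> nat \<Rightarrow> (nat \<Rightarrow> real) set" where
  "state_space N b = {s \<in> simplexS b. \<forall>k\<in>{1..b}. \<exists>j::nat. j \<le> N \<and> s k = real j / real N}"

definition drift :: "nat \<Rightarrow> real \<Rightarrow> (nat \<Rightarrow> real) \<Rightarrow> nat \<Rightarrow> real" where
  "drift b l s k = l * ((ext b s (k - 1))\<^sup>2 - (ext b s k)\<^sup>2) - (ext b s k - ext b s (k + 1))"

definition is_fixed_point :: "nat \<Rightarrow> real \<Rightarrow> (nat \<Rightarrow> real) \<Rightarrow> bool" where
  "is_fixed_point b l s \<longleftrightarrow> s \<in> simplexS b \<and> (\<forall>k\<in>{1..b}. drift b l s k = 0)"

definition rate :: "nat \<Rightarrow> nat \<Rightarrow> real \<Rightarrow> (nat \<Rightarrow> real) \<Rightarrow> (nat \<Rightarrow> real) \<Rightarrow> real" where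
  "rate N b l s s' =
     (\<Sum>k\<in>{1..b}.
        (if s' = s(k := s k + 1 / real N)
         then l * real N * ((ext b s (k - 1))\<^sup>2 - (ext b s k)\<^sup>2) else 0)
      + (if s' = s(k := s k - 1 / real N)
         then real N * (ext b s k - ext b s (k + 1)) else 0))"

definition is_stationary :: "nat \<Rightarrow> nat \<Rightarrow> real \<Rightarrow> ((nat \<Rightarrow> real) \<Rightarrow> real) \<Rightarrow> bool" where
  "is_stationary N b l \<pi> \<longleftrightarrow>
     (\<forall>s\<in>state_space N b. 0 \<le> \<pi> s) \<and>
     (\<Sum>s\<in>state_space N b. \<pi> s) = 1 \<and>
     (\<forall>x\<in>state_space N b.
        \<pi> x * (\<Sum>y\<in>state_space N b - {x}. rate N b l x y) =
        (\<Sum>y\<in>state_space N b - {x}. \<pi> y * rate N b l y x))"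

definition exp_sq_dist :: "nat \<Rightarrow> nat \<Rightarrow> ((nat \<Rightarrow> real) \<Rightarrow> real) \<Rightarrow> (nat \<Rightarrow> real) \<Rightarrow> real" where
  "exp_sq_dist N b \<pi> sstar =
     (\<Sum>s\<in>state_space N b. \<pi> s * (\<Sum>k\<in>{1..b}. (s k - sstar k)\<^sup>2))"

end

theory Submission
  imports Defs "HOL-Real_Asymp.Real_Asymp"
begin
definition hub :: "real \<Rightarrow> real \<Rightarrow> real" where
  "hub e x = (if \<bar>x\<bar> \<le> e then x\<^sup>2 / (2*e) else \<bar>x\<bar> - e/2)"
definition hubd :: "real \<Rightarrow> real \<Rightarrow> real" where
  "hubd e x = (if \<bar>x\<bar> \<le> e then x / e else sgn x)"

lemma hub_taylor:
  assumes e: "e > 0" and h: "\<bar>h\<bar> \<le> e"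
  shows "hub e (x + h) \<le> hub e x + hubd e x * h + h\<^sup>2 / (2*e)"
proof (cases "\<bar>x\<bar> \<le> e")
  case True
  have "hub e (x+h) \<le> (x+h)\<^sup>2/(2*e)"
  proof (cases "\<bar>x+h\<bar> \<le> e")
    case False
    have "(\<bar>x+h\<bar> - e)\<^sup>2 \<ge> 0" by simp
    hence "\<bar>x+h\<bar> - e/2 \<le> (x+h)\<^sup>2/(2*e)" using e
      by (simp add: field_simps power2_eq_square abs_mult_self_eq)
    thus ?thesis using False by (simp add: hub_def)
  qed (simp add: hub_def)
  also have "\<dots> = hub e x + hubd e x * h + h\<^sup>2 / (2*e)" using True e
    by (simp add: hub_def hubd_def field_simps power2_eq_square)
  finally show ?thesis .
next
  case False
  show ?thesis
  proof (cases "x > 0")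
    case xp: True
    hence xe: "x > e" using False by simp
    show ?thesis
    proof (cases "\<bar>x+h\<bar> \<le> e")
      case True
      have "(x-e) * (x - e + 2*h) \<le> 0" using xe True h
        by (intro mult_nonneg_nonpos) auto
      hence "(x+h)\<^sup>2 \<le> 2*e*(x - e/2 + h) + h\<^sup>2"
        by (simp add: algebra_simps power2_eq_square)
      hence "(x+h)\<^sup>2/(2*e) \<le> (2*e*(x - e/2 + h) + h\<^sup>2)/(2*e)" using e
        by (intro divide_right_mono) auto
      also have "\<dots> = x - e/2 + h + h\<^sup>2/(2*e)" using e by (simp add: field_simps)
      finally have "(x+h)\<^sup>2/(2*e) \<le> x - e/2 + h + h\<^sup>2/(2*e)" .
      thus ?thesis using True False xp by (simp add: hub_def hubd_def)
    next
      case F2: False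
      hence "x + h > e" using xe h by auto
      thus ?thesis using False F2 xp e by (simp add: hub_def hubd_def)
    qed
  next
    case xn: False
    hence xe: "x < -e" using False by simp
    show ?thesis
    proof (cases "\<bar>x+h\<bar> \<le> e")
      case True
      have "(-x-e) * (-x - e - 2*h) \<le> 0" using xe True h
        by (intro mult_nonneg_nonpos) auto
      hence "(x+h)\<^sup>2 \<le> 2*e*(-x - e/2 - h) + h\<^sup>2"
        by (simp add: algebra_simps power2_eq_square)
      hence "(x+h)\<^sup>2/(2*e) \<le> (2*e*(-x - e/2 - h) + h\<^sup>2)/(2*e)" using e
        by (intro divide_right_mono) auto
      also have "\<dots> = -x - e/2 - h + h\<^sup>2/(2*e)" using e by (simp add: field_simps)
      finally have "(x+h)\<^sup>2/(2*e) \<le> -x - e/2 - h + h\<^sup>2/(2*e)" .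
      thus ?thesis using True False xn xe e by (simp add: hub_def hubd_def)
    next
      case F2: False
      hence "x + h < -e" using xe h by auto
      thus ?thesis using False F2 xn xe e by (simp add: hub_def hubd_def)
    qed
  qed
qed

lemma hub_lip:
  assumes e: "e > 0"
  shows "\<bar>hub e y - hub e x\<bar> \<le> \<bar>y - x\<bar>"
proof -
  have key: "\<And>x y. x \<le> y \<Longrightarrow> \<bar>hub e y - hub e x\<bar> \<le> y - x"
  proof -
    fix x y :: real assume xy: "x \<le> y"
    consider "x < -e" | "-e \<le> x \<and> x \<le> e" | "e < x" by linarith
    thus "\<bar>hub e y - hub e x\<bar> \<le> y - x"
    proof cases
      case 1
      consider "y < -e" | "-e \<le> y \<and> y \<le> e" | "e < y" by linarith
      thus ?thesis
      proof cases
        case 1 thus ?thesis using \<open>x < -e\<close> xy e by (simp add: hub_def)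
      next
        case 2
        have q1: "y\<^sup>2/(2*e) + e/2 + y = (y+e)\<^sup>2/(2*e)" using e by (simp add: field_simps power2_eq_square)
        have q2: "y\<^sup>2/(2*e) + e/2 - y = (y-e)\<^sup>2/(2*e)" using e by (simp add: field_simps power2_eq_square)
        have "(y-e)\<^sup>2 \<le> (2*e)\<^sup>2" using 2 e by (subst abs_le_square_iff[symmetric]) auto
        hence "(y-e)\<^sup>2/(2*e) \<le> (2*e)\<^sup>2/(2*e)" using e by (intro divide_right_mono) auto
        also have "\<dots> = 2*e" using e by (simp add: power2_eq_square)
        finally have q3: "(y-e)\<^sup>2/(2*e) \<le> 2*e" .
        have q4: "(y+e)\<^sup>2/(2*e) \<ge> 0" using e by simp
        have "\<bar>y\<^sup>2/(2*e) - (-x - e/2)\<bar> \<le> y - x" using q1 q2 q3 q4 \<open>x < -e\<close> e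
          unfolding abs_le_iff by linarith
        thus ?thesis using 2 \<open>x < -e\<close> e by (simp add: hub_def abs_le_iff)
      next
        case 3 thus ?thesis using \<open>x < -e\<close> xy e by (simp add: hub_def)
      qed
    next
      case 2 note xr = this
      consider "-e \<le> y \<and> y \<le> e" | "e < y" using xy xr by linarith
      thus ?thesis
      proof cases
        case 1
        have "\<bar>y\<^sup>2/(2*e) - x\<^sup>2/(2*e)\<bar> = \<bar>y - x\<bar> * (\<bar>y + x\<bar>/(2*e))" using e
          by (simp add: field_simps power2_eq_square abs_mult[symmetric])
        also have "\<dots> \<le> \<bar>y - x\<bar> * 1" using 1 xr e
          by (intro mult_left_mono) (auto simp: field_simps)
        finally show ?thesis using 1 xr xy by (simp add: hub_def abs_le_iff)
      next
        case 2 note y3 = this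
        have q1: "x\<^sup>2/(2*e) + e/2 - x = (x-e)\<^sup>2/(2*e)" using e by (simp add: field_simps power2_eq_square)
        have q2: "x\<^sup>2/(2*e) + e/2 + x = (x+e)\<^sup>2/(2*e)" using e by (simp add: field_simps power2_eq_square)
        have "(x+e)\<^sup>2 \<le> (2*e)\<^sup>2" using xr e by (subst abs_le_square_iff[symmetric]) auto
        hence "(x+e)\<^sup>2/(2*e) \<le> (2*e)\<^sup>2/(2*e)" using e by (intro divide_right_mono) auto
        also have "\<dots> = 2*e" using e by (simp add: power2_eq_square)
        finally have q3: "(x+e)\<^sup>2/(2*e) \<le> 2*e" .
        have q4: "(x-e)\<^sup>2/(2*e) \<ge> 0" using e by simp
        have "\<bar>y - e/2 - x\<^sup>2/(2*e)\<bar> \<le> y - x" using q1 q2 q3 q4 xr y3 e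
          unfolding abs_le_iff by linarith
        thus ?thesis using xr y3 e by (simp add: hub_def abs_le_iff)
      qed
    next
      case 3 thus ?thesis using xy e by (simp add: hub_def)
    qed
  qed
  show ?thesis
  proof (cases "x \<le> y")
    case True thus ?thesis using key[of x y] by simp
  next
    case False thus ?thesis using key[of y x] by (simp add: abs_minus_commute)
  qed
qed

lemma hubd_props:
  assumes e: "e > 0"
  shows "\<bar>hubd e x\<bar> \<le> 1" "hubd e x * x \<ge> \<bar>x\<bar> - e"
proof -
  show "\<bar>hubd e x\<bar> \<le> 1" using e by (auto simp: hubd_def abs_sgn_eq divide_le_eq)
  show "hubd e x * x \<ge> \<bar>x\<bar> - e"
  proof (cases "\<bar>x\<bar> \<le> e")
    case True
    have "x * x / e \<ge> 0" using e by simp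
    moreover have "hubd e x * x = x * x / e" using True by (simp add: hubd_def)
    ultimately show ?thesis using True by linarith
  next
    case False thus ?thesis using e by (simp add: hubd_def sgn_if)
  qed
qed

lemma hub_bounds:
  assumes e: "e > 0"
  shows "\<bar>x\<bar> - e/2 \<le> hub e x" "hub e x \<le> \<bar>x\<bar>" "0 \<le> hub e x"
proof -
  have a: "(\<bar>x\<bar> - e)\<^sup>2 \<ge> 0" by simp
  show "\<bar>x\<bar> - e/2 \<le> hub e x"
    using a e by (auto simp: hub_def field_simps power2_eq_square)
  show "hub e x \<le> \<bar>x\<bar>"
  proof (cases "\<bar>x\<bar> \<le> e")
    case True
    have "x\<^sup>2 = \<bar>x\<bar> * \<bar>x\<bar>" by (simp add: power2_eq_square)
    also have "\<dots> \<le> \<bar>x\<bar> * (2*e)" using True by (intro mult_left_mono) auto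
    finally show ?thesis using True e by (simp add: hub_def field_simps)
  qed (use e in \<open>simp add: hub_def\<close>)
  show "0 \<le> hub e x" using e by (auto simp: hub_def)
qed

lemma ext_Suc_le:
  assumes "s \<in> simplexS b"
  shows "ext b s (Suc k) \<le> ext b s k"
proof -
  from assms have z: "\<forall>k. k \<notin> {1..b} \<longrightarrow> s k = 0"
    and m: "\<forall>k\<in>{1..b}. ext b s k \<le> ext b s (k - 1)"
    and p: "\<forall>k\<in>{1..b}. 0 \<le> s k" unfolding simplexS_def by auto
  show ?thesis
  proof (cases "Suc k \<le> b")
    case True thus ?thesis using m[rule_format, of "Suc k"] by simp
  next
    case False
    hence "ext b s (Suc k) = 0" by (simp add: ext_def)
    moreover have "ext b s k \<ge> 0" using p by (auto simp: ext_def)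
    ultimately show ?thesis by simp
  qed
qed

lemma ext_nonneg: "s \<in> simplexS b \<Longrightarrow> 0 \<le> ext b s k"
  unfolding simplexS_def ext_def by auto

lemma ext_antimono:
  assumes "s \<in> simplexS b" "i \<le> j"
  shows "ext b s j \<le> ext b s i"
  using lift_Suc_antimono_le[of "ext b s", OF ext_Suc_le[OF assms(1)] assms(2)] .

lemma ext_le1: "s \<in> simplexS b \<Longrightarrow> ext b s k \<le> 1"
  using ext_antimono[of s b 0 k] by (simp add: ext_def)

lemma ext_0[simp]: "ext b s 0 = 1" by (simp add: ext_def)
lemma ext_big[simp]: "b < k \<Longrightarrow> ext b s k = 0" by (simp add: ext_def)
lemma ext_in[simp]: "k \<in> {1..b} \<Longrightarrow> ext b s k = s k" by (simp add: ext_def)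

lemma ext_upd:
  assumes "k \<in> {1..b}"
  shows "ext b (s(k := w)) i = (if i = k then w else ext b s i)"
  using assms by (auto simp: ext_def)

lemma finite_state_space: "finite (state_space N b)"
proof -
  let ?G = "(\<lambda>j. real j / real N) ` {..N}"
  have "state_space N b \<subseteq> {f. \<forall>x. (x \<in> {1..b} \<longrightarrow> f x \<in> ?G) \<and> (x \<notin> {1..b} \<longrightarrow> f x = 0)}"
    unfolding state_space_def simplexS_def by auto
  moreover have "finite {f. \<forall>x. (x \<in> {1..b} \<longrightarrow> f x \<in> ?G) \<and> (x \<notin> {1..b} \<longrightarrow> f x = (0::real))}"
    by (rule finite_set_of_finite_funs) auto
  ultimately show ?thesis by (rule finite_subset)
qed

lemma grid:
  assumes "x \<in> state_space N b" "N \<ge> 1"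
  shows "\<exists>j. j \<le> N \<and> ext b x k = real j / real N"
proof -
  consider "k = 0" | "k \<in> {1..b}" | "b < k" by force
  thus ?thesis
  proof cases
    case 1 thus ?thesis using assms by (intro exI[of _ N]) auto
  next
    case 2 thus ?thesis using assms unfolding state_space_def by auto
  next
    case 3 thus ?thesis by (intro exI[of _ 0]) auto
  qed
qed

lemma up_mem:
  assumes x: "x \<in> state_space N b" and N: "N \<ge> 1" and k: "k \<in> {1..b}"
    and lt: "ext b x k < ext b x (k - 1)"
  shows "x(k := x k + 1 / real N) \<in> state_space N b"
proof -
  let ?z = "x(k := x k + 1 / real N)"
  have xs: "x \<in> simplexS b" using x unfolding state_space_def by auto
  obtain j where j: "j \<le> N" "ext b x k = real j / real N" using grid[OF x N] by blast
  obtain j' where j': "j' \<le> N" "ext b x (k-1) = real j' / real N" using grid[OF x N] by blast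
  have "real j < real j'" using lt j j' N by (auto simp: divide_less_cancel)
  hence jj: "j + 1 \<le> j'" by linarith
  have xk: "x k = real j / real N" using j k by simp
  have zk: "x k + 1 / real N = real (j+1) / real N" using xk N by (simp add: field_simps)
  have zk_le: "x k + 1 / real N \<le> ext b x (k - 1)"
    unfolding zk j'(2) using jj N by (intro divide_right_mono) auto
  have E: "\<And>i. ext b ?z i = (if i = k then x k + 1 / real N else ext b x i)"
    using ext_upd[OF k] by simp
  have "?z \<in> simplexS b"
    unfolding simplexS_def
  proof (intro CollectI conjI ballI allI impI)
    fix i assume "i \<notin> {1..b}" thus "?z i = 0" using xs k unfolding simplexS_def by auto
  next
    fix i assume i: "i \<in> {1..b}"
    show "ext b ?z i \<le> ext b ?z (i - 1)"
    proof (cases "i = k")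
      case True thus ?thesis unfolding E using zk_le k by auto
    next
      case False
      show ?thesis
      proof (cases "i - 1 = k")
        case True
        have "ext b x i \<le> ext b x k" using ext_antimono[OF xs, of k i] True by simp
        moreover have "ext b x k = x k" using k by simp
        moreover have "(1::real) / real N \<ge> 0" by simp
        ultimately show ?thesis unfolding E using False True by (simp; linarith)
      next
        case F2: False
        thus ?thesis unfolding E using False xs i unfolding simplexS_def by auto
      qed
    qed
  next
    fix i assume i: "i \<in> {1..b}"
    show "0 \<le> ?z i" using xs i k unfolding simplexS_def by auto
  qed
  moreover have "\<forall>i\<in>{1..b}. \<exists>j::nat. j \<le> N \<and> ?z i = real j / real N"
  proof
    fix i assume i: "i \<in> {1..b}"
    show "\<exists>j::nat. j \<le> N \<and> ?z i = real j / real N"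
    proof (cases "i = k")
      case True thus ?thesis using zk jj j' by (intro exI[of _ "j+1"]) auto
    next
      case False thus ?thesis using x i unfolding state_space_def by auto
    qed
  qed
  ultimately show ?thesis unfolding state_space_def by blast
qed

lemma dn_mem:
  assumes x: "x \<in> state_space N b" and N: "N \<ge> 1" and k: "k \<in> {1..b}"
    and lt: "ext b x (k + 1) < ext b x k"
  shows "x(k := x k - 1 / real N) \<in> state_space N b"
proof -
  let ?z = "x(k := x k - 1 / real N)"
  have xs: "x \<in> simplexS b" using x unfolding state_space_def by auto
  obtain j where j: "j \<le> N" "ext b x k = real j / real N" using grid[OF x N] by blast
  obtain j' where j': "j' \<le> N" "ext b x (k+1) = real j' / real N" using grid[OF x N] by blast
  have "real j' < real j" using lt j j' N by (auto simp: divide_less_cancel)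
  hence jj: "j' + 1 \<le> j" by linarith
  have xk: "x k = real j / real N" using j k by simp
  have zk: "x k - 1 / real N = real (j-1) / real N" using xk N jj by (simp add: field_simps of_nat_diff)
  have zk_ge: "ext b x (k+1) \<le> x k - 1 / real N"
    unfolding zk j'(2) using jj N by (intro divide_right_mono) auto
  have zk_0: "0 \<le> x k - 1 / real N" unfolding zk by simp
  have E: "\<And>i. ext b ?z i = (if i = k then x k - 1 / real N else ext b x i)"
    using ext_upd[OF k] by simp
  have "?z \<in> simplexS b"
    unfolding simplexS_def
  proof (intro CollectI conjI ballI allI impI)
    fix i assume "i \<notin> {1..b}" thus "?z i = 0" using xs k unfolding simplexS_def by auto
  next
    fix i assume i: "i \<in> {1..b}"
    show "ext b ?z i \<le> ext b ?z (i - 1)"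
    proof (cases "i = k")
      case True
      have "ext b x k \<le> ext b x (k - 1)" using ext_antimono[OF xs, of "k-1" k] by simp
      moreover have "ext b x k = x k" using k by simp
      moreover have "(1::real) / real N \<ge> 0" by simp
      ultimately show ?thesis unfolding E using True k by (auto; linarith)
    next
      case False
      show ?thesis
      proof (cases "i - 1 = k")
        case True
        hence "i = k + 1" using i by auto
        thus ?thesis unfolding E using False True zk_ge by simp
      next
        case F2: False
        thus ?thesis unfolding E using False xs i unfolding simplexS_def by auto
      qed
    qed
  next
    fix i assume i: "i \<in> {1..b}"
    show "0 \<le> ?z i" using xs i k zk_0 unfolding simplexS_def by auto
  qed
  moreover have "\<forall>i\<in>{1..b}. \<exists>j::nat. j \<le> N \<and> ?z i = real j / real N"
  proof
    fix i assume i: "i \<in> {1..b}"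
    show "\<exists>j::nat. j \<le> N \<and> ?z i = real j / real N"
    proof (cases "i = k")
      case True thus ?thesis using zk j by (intro exI[of _ "j-1"]) auto
    next
      case False thus ?thesis using x i unfolding state_space_def by auto
    qed
  qed
  ultimately show ?thesis unfolding state_space_def by blast
qed

definition gen :: "nat \<Rightarrow> nat \<Rightarrow> real \<Rightarrow> ((nat \<Rightarrow> real) \<Rightarrow> real) \<Rightarrow> (nat \<Rightarrow> real) \<Rightarrow> real" where
  "gen N b l V x = (\<Sum>y\<in>state_space N b - {x}. rate N b l x y * (V y - V x))"

lemma sum_if_eq_single:
  fixes c :: real and W :: "'a \<Rightarrow> real"
  assumes "finite S"
  shows "(\<Sum>y\<in>S. (if y = a then c else 0) * W y) = (if a \<in> S then c * W a else 0)"
proof -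
  have "(\<Sum>y\<in>S. (if y = a then c else 0) * W y) = (\<Sum>y\<in>S. if y = a then c * W y else 0)"
    by (intro sum.cong) auto
  also have "\<dots> = (if a \<in> S then c * W a else 0)" using assms by (simp add: sum.delta)
  finally show ?thesis .
qed

lemma gen_formula:
  assumes x: "x \<in> state_space N b" and N: "N \<ge> 1"
  shows "gen N b l V x = (\<Sum>k\<in>{1..b}.
      l * real N * ((ext b x (k - 1))\<^sup>2 - (ext b x k)\<^sup>2) * (V (x(k := x k + 1 / real N)) - V x)
    + real N * (ext b x k - ext b x (k + 1)) * (V (x(k := x k - 1 / real N)) - V x))"
proof -
  let ?S = "state_space N b - {x}"
  let ?W = "\<lambda>y. V y - V x"
  have fin: "finite ?S" using finite_state_space by auto
  have xs: "x \<in> simplexS b" using x unfolding state_space_def by auto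
  have "gen N b l V x = (\<Sum>y\<in>?S. \<Sum>k\<in>{1..b}.
        (if y = x(k := x k + 1 / real N) then l * real N * ((ext b x (k - 1))\<^sup>2 - (ext b x k)\<^sup>2) else 0) * ?W y
      + (if y = x(k := x k - 1 / real N) then real N * (ext b x k - ext b x (k + 1)) else 0) * ?W y)"
    unfolding gen_def rate_def by (simp add: sum_distrib_right distrib_right)
  also have "\<dots> = (\<Sum>k\<in>{1..b}. \<Sum>y\<in>?S.
        (if y = x(k := x k + 1 / real N) then l * real N * ((ext b x (k - 1))\<^sup>2 - (ext b x k)\<^sup>2) else 0) * ?W y
      + (if y = x(k := x k - 1 / real N) then real N * (ext b x k - ext b x (k + 1)) else 0) * ?W y)"
    by (rule sum.swap)
  also have "\<dots> = (\<Sum>k\<in>{1..b}.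
      l * real N * ((ext b x (k - 1))\<^sup>2 - (ext b x k)\<^sup>2) * ?W (x(k := x k + 1 / real N))
    + real N * (ext b x k - ext b x (k + 1)) * ?W (x(k := x k - 1 / real N)))"
  proof (intro sum.cong refl)
    fix k assume k: "k \<in> {1..b}"
    have Npos: "(1::real) / real N \<noteq> 0" using N by simp
    have ne1: "x(k := x k + 1 / real N) \<noteq> x"
    proof
      assume "x(k := x k + 1 / real N) = x"
      hence "x k + 1 / real N = x k" by (metis fun_upd_same)
      thus False using Npos by simp
    qed
    have ne2: "x(k := x k - 1 / real N) \<noteq> x"
    proof
      assume "x(k := x k - 1 / real N) = x"
      hence "x k - 1 / real N = x k" by (metis fun_upd_same)
      thus False using Npos by simp
    qed
    have A: "(if x(k := x k + 1 / real N) \<in> ?S then l * real N * ((ext b x (k - 1))\<^sup>2 - (ext b x k)\<^sup>2) * ?W (x(k := x k + 1 / real N)) else 0)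
        = l * real N * ((ext b x (k - 1))\<^sup>2 - (ext b x k)\<^sup>2) * ?W (x(k := x k + 1 / real N))"
    proof (cases "ext b x k < ext b x (k - 1)")
      case True thus ?thesis using up_mem[OF x N k True] ne1 by simp
    next
      case False
      hence "ext b x k = ext b x (k - 1)" using ext_antimono[OF xs, of "k-1" k] by simp
      thus ?thesis by simp
    qed
    have B: "(if x(k := x k - 1 / real N) \<in> ?S then real N * (ext b x k - ext b x (k + 1)) * ?W (x(k := x k - 1 / real N)) else 0)
        = real N * (ext b x k - ext b x (k + 1)) * ?W (x(k := x k - 1 / real N))"
    proof (cases "ext b x (k + 1) < ext b x k")
      case True thus ?thesis using dn_mem[OF x N k True] ne2 by simp
    next
      case False
      hence "ext b x k = ext b x (k + 1)" using ext_antimono[OF xs, of k "k+1"] by simp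
      thus ?thesis by simp
    qed
    show "(\<Sum>y\<in>?S.
        (if y = x(k := x k + 1 / real N) then l * real N * ((ext b x (k - 1))\<^sup>2 - (ext b x k)\<^sup>2) else 0) * ?W y
      + (if y = x(k := x k - 1 / real N) then real N * (ext b x k - ext b x (k + 1)) else 0) * ?W y)
      = l * real N * ((ext b x (k - 1))\<^sup>2 - (ext b x k)\<^sup>2) * ?W (x(k := x k + 1 / real N))
    + real N * (ext b x k - ext b x (k + 1)) * ?W (x(k := x k - 1 / real N))"
      unfolding sum.distrib sum_if_eq_single[OF fin] A B ..
  qed
  finally show ?thesis .
qed

lemma swap_offdiag:
  assumes "finite S"
  shows "(\<Sum>x\<in>S. \<Sum>y\<in>S - {x}. F x y) = (\<Sum>y\<in>S. \<Sum>x\<in>S - {y}. F x y)"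
proof -
  have e: "\<And>x. (\<Sum>y\<in>S - {x}. F x y) = (\<Sum>y\<in>S. if y \<noteq> x then F x y else 0)"
    using assms by (simp add: sum.If_cases, intro sum.cong, auto)
  have e2: "\<And>y. (\<Sum>x\<in>S - {y}. F x y) = (\<Sum>x\<in>S. if y \<noteq> x then F x y else 0)"
    using assms by (simp add: sum.If_cases, intro sum.cong, auto)
  show ?thesis unfolding e e2 by (rule sum.swap)
qed

lemma stationary_gen_zero:
  assumes st: "is_stationary N b l \<pi>"
  shows "(\<Sum>x\<in>state_space N b. \<pi> x * gen N b l V x) = 0"
proof -
  let ?S = "state_space N b"
  have fin: "finite ?S" by (rule finite_state_space)
  have bal: "\<And>x. x \<in> ?S \<Longrightarrow> \<pi> x * (\<Sum>y\<in>?S - {x}. rate N b l x y) = (\<Sum>y\<in>?S - {x}. \<pi> y * rate N b l y x)"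
    using st unfolding is_stationary_def by blast
  have "(\<Sum>x\<in>?S. \<pi> x * gen N b l V x)
      = (\<Sum>x\<in>?S. \<Sum>y\<in>?S - {x}. \<pi> x * rate N b l x y * V y) - (\<Sum>x\<in>?S. V x * (\<pi> x * (\<Sum>y\<in>?S - {x}. rate N b l x y)))"
    unfolding gen_def by (simp add: sum_distrib_left sum_subtractf right_diff_distrib algebra_simps)
  also have "(\<Sum>x\<in>?S. \<Sum>y\<in>?S - {x}. \<pi> x * rate N b l x y * V y) = (\<Sum>y\<in>?S. \<Sum>x\<in>?S - {y}. \<pi> x * rate N b l x y * V y)"
    by (rule swap_offdiag[OF fin])
  also have "(\<Sum>x\<in>?S. V x * (\<pi> x * (\<Sum>y\<in>?S - {x}. rate N b l x y))) = (\<Sum>x\<in>?S. V x * (\<Sum>y\<in>?S - {x}. \<pi> y * rate N b l y x))"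
    by (intro sum.cong refl) (simp add: bal)
  also have "\<dots> = (\<Sum>y\<in>?S. \<Sum>x\<in>?S - {y}. \<pi> x * rate N b l x y * V y)"
    by (simp add: sum_distrib_left mult.commute mult.left_commute)
  finally show ?thesis by simp
qed

lemma shift_down:
  fixes F :: "nat \<Rightarrow> real"
  shows "(\<Sum>k\<in>{1..b}. F (k - 1)) + F b = (\<Sum>k\<in>{1..b}. F k) + F 0"
  by (induction b) (auto simp: add.commute add.left_commute)

lemma shift_up:
  fixes G :: "nat \<Rightarrow> real"
  shows "(\<Sum>k\<in>{1..b}. G (k + 1)) + G 1 = (\<Sum>k\<in>{1..b}. G k) + G (b + 1)"
  by (induction b) (auto simp: add.commute add.left_commute)

lemma drift_abs:
  fixes v d g p :: "nat \<Rightarrow> real"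
  assumes d0: "d 0 = 0" and db: "d (b + 1) = 0" and v0: "v 0 = 0" and vb: "v (b + 1) = 0"
    and g1: "\<And>k. k \<in> {1..b} \<Longrightarrow> \<bar>g k\<bar> \<le> 1"
    and g2: "\<And>k. k \<in> {1..b} \<Longrightarrow> g k * d k \<ge> \<bar>d k\<bar> - \<epsilon>"
    and vpos: "\<And>k. v k \<ge> 0" and ppos: "\<And>k. p k \<ge> 0"
    and w: "\<And>k. k \<in> {1..b} \<Longrightarrow> (v (k - 1) - v k) + p k * (v (k + 1) - v k) \<le> - c * v k"
  shows "(\<Sum>k\<in>{1..b}. v k * g k * (p (k - 1) * d (k - 1) - (1 + p k) * d k + d (k + 1)))
         \<le> - c * (\<Sum>k\<in>{1..b}. v k * \<bar>d k\<bar>) + \<epsilon> * (\<Sum>k\<in>{1..b}. v k * (1 + p k))"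
proof -
  have tm: "v k * g k * (p (k - 1) * d (k - 1) - (1 + p k) * d k + d (k + 1))
      \<le> v k * p (k - 1) * \<bar>d (k - 1)\<bar> - v k * (1 + p k) * \<bar>d k\<bar> + v k * \<bar>d (k + 1)\<bar>
         + \<epsilon> * (v k * (1 + p k))" if k: "k \<in> {1..b}" for k
  proof -
    have a1: "g k * d (k - 1) \<le> \<bar>d (k - 1)\<bar>"
    proof -
      have "g k * d (k - 1) \<le> \<bar>g k\<bar> * \<bar>d (k - 1)\<bar>" by (metis abs_ge_self abs_mult)
      also have "\<dots> \<le> 1 * \<bar>d (k - 1)\<bar>" using g1[OF k] by (intro mult_right_mono) auto
      finally show ?thesis by simp
    qed
    have a2: "g k * d (k + 1) \<le> \<bar>d (k + 1)\<bar>"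
    proof -
      have "g k * d (k + 1) \<le> \<bar>g k\<bar> * \<bar>d (k + 1)\<bar>" by (metis abs_ge_self abs_mult)
      also have "\<dots> \<le> 1 * \<bar>d (k + 1)\<bar>" using g1[OF k] by (intro mult_right_mono) auto
      finally show ?thesis by simp
    qed
    have b1: "p (k - 1) * (g k * d (k - 1)) \<le> p (k - 1) * \<bar>d (k - 1)\<bar>"
      using a1 ppos by (intro mult_left_mono) auto
    have b2: "(1 + p k) * (\<bar>d k\<bar> - \<epsilon>) \<le> (1 + p k) * (g k * d k)"
      using g2[OF k] ppos[of k] by (intro mult_left_mono) auto
    have c: "p (k - 1) * (g k * d (k - 1)) - (1 + p k) * (g k * d k) + g k * d (k + 1)
        \<le> p (k - 1) * \<bar>d (k - 1)\<bar> - (1 + p k) * (\<bar>d k\<bar> - \<epsilon>) + \<bar>d (k + 1)\<bar>"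
      using b1 b2 a2 by linarith
    have "v k * (p (k - 1) * (g k * d (k - 1)) - (1 + p k) * (g k * d k) + g k * d (k + 1))
        \<le> v k * (p (k - 1) * \<bar>d (k - 1)\<bar> - (1 + p k) * (\<bar>d k\<bar> - \<epsilon>) + \<bar>d (k + 1)\<bar>)"
      using c vpos[of k] by (rule mult_left_mono)
    thus ?thesis by (simp add: algebra_simps)
  qed
  have "(\<Sum>k\<in>{1..b}. v k * g k * (p (k - 1) * d (k - 1) - (1 + p k) * d k + d (k + 1)))
      \<le> (\<Sum>k\<in>{1..b}. v k * p (k - 1) * \<bar>d (k - 1)\<bar> - v k * (1 + p k) * \<bar>d k\<bar> + v k * \<bar>d (k + 1)\<bar>
         + \<epsilon> * (v k * (1 + p k)))"
    by (rule sum_mono) (rule tm)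
  also have "\<dots> = (\<Sum>k\<in>{1..b}. v k * p (k - 1) * \<bar>d (k - 1)\<bar>) - (\<Sum>k\<in>{1..b}. v k * (1 + p k) * \<bar>d k\<bar>)
        + (\<Sum>k\<in>{1..b}. v k * \<bar>d (k + 1)\<bar>) + \<epsilon> * (\<Sum>k\<in>{1..b}. v k * (1 + p k))"
    by (simp add: sum.distrib sum_subtractf sum_distrib_left)
  also have "(\<Sum>k\<in>{1..b}. v k * p (k - 1) * \<bar>d (k - 1)\<bar>) = (\<Sum>k\<in>{1..b}. v (k + 1) * p k * \<bar>d k\<bar>)"
  proof -
    have "(\<Sum>k\<in>{1..b}. v k * p (k - 1) * \<bar>d (k - 1)\<bar>) = (\<Sum>k\<in>{1..b}. (\<lambda>j. v (j + 1) * p j * \<bar>d j\<bar>) (k - 1))"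
      by (intro sum.cong) auto
    thus ?thesis using shift_down[of "\<lambda>j. v (j + 1) * p j * \<bar>d j\<bar>" b] d0 vb by simp
  qed
  also have "(\<Sum>k\<in>{1..b}. v k * \<bar>d (k + 1)\<bar>) = (\<Sum>k\<in>{1..b}. v (k - 1) * \<bar>d k\<bar>)"
  proof -
    have "(\<Sum>k\<in>{1..b}. v k * \<bar>d (k + 1)\<bar>) = (\<Sum>k\<in>{1..b}. (\<lambda>j. v (j - 1) * \<bar>d j\<bar>) (k + 1))"
      by (intro sum.cong) auto
    thus ?thesis using shift_up[of "\<lambda>j. v (j - 1) * \<bar>d j\<bar>" b] db v0 by simp
  qed
  also have "(\<Sum>k\<in>{1..b}. v (k + 1) * p k * \<bar>d k\<bar>) - (\<Sum>k\<in>{1..b}. v k * (1 + p k) * \<bar>d k\<bar>)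
        + (\<Sum>k\<in>{1..b}. v (k - 1) * \<bar>d k\<bar>)
      = (\<Sum>k\<in>{1..b}. \<bar>d k\<bar> * ((v (k - 1) - v k) + p k * (v (k + 1) - v k)))"
  proof -
    have "(\<Sum>k\<in>{1..b}. \<bar>d k\<bar> * ((v (k - 1) - v k) + p k * (v (k + 1) - v k)))
        = (\<Sum>k\<in>{1..b}. v (k + 1) * p k * \<bar>d k\<bar> - v k * (1 + p k) * \<bar>d k\<bar> + v (k - 1) * \<bar>d k\<bar>)"
      by (intro sum.cong) (auto simp: algebra_simps)
    also have "\<dots> = (\<Sum>k\<in>{1..b}. v (k + 1) * p k * \<bar>d k\<bar>) - (\<Sum>k\<in>{1..b}. v k * (1 + p k) * \<bar>d k\<bar>)
        + (\<Sum>k\<in>{1..b}. v (k - 1) * \<bar>d k\<bar>)"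
      by (simp only: sum.distrib sum_subtractf)
    finally show ?thesis by simp
  qed
  also have "\<dots> \<le> (\<Sum>k\<in>{1..b}. \<bar>d k\<bar> * (- c * v k))"
    by (intro sum_mono mult_left_mono w) auto
  also have "\<dots> = - c * (\<Sum>k\<in>{1..b}. v k * \<bar>d k\<bar>)"
    by (simp add: sum_distrib_left algebra_simps)
  finally show ?thesis by simp
qed

lemma fp_tail:
  assumes fp: "is_fixed_point b l y" and m: "m \<in> {1..b}"
  shows "ext b y m = l * ((ext b y (m - 1))\<^sup>2 - (ext b y b)\<^sup>2)"
proof -
  let ?Y = "ext b y"
  let ?F = "\<lambda>m. l * ((?Y (m - 1))\<^sup>2 - (?Y b)\<^sup>2) - ?Y m"
  have dz: "\<And>k. k \<in> {1..b} \<Longrightarrow> l * ((?Y (k - 1))\<^sup>2 - (?Y k)\<^sup>2) - (?Y k - ?Y (k + 1)) = 0"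
    using fp unfolding is_fixed_point_def drift_def by blast
  have "\<forall>j. j < b \<longrightarrow> ?F (b - j) = 0"
  proof (intro allI impI)
    fix j assume "j < b"
    thus "?F (b - j) = 0"
    proof (induction j)
      case 0
      thus ?case using dz[of b] by simp
    next
      case (Suc j)
      let ?m = "b - Suc j"
      have m1: "?m \<in> {1..b}" using Suc.prems by auto
      have e: "?m + 1 = b - j" using Suc.prems by auto
      have "?F (b - j) = 0" using Suc by simp
      hence "l * ((?Y ?m)\<^sup>2 - (?Y b)\<^sup>2) - ?Y (?m + 1) = 0" unfolding e[symmetric] by simp
      thus ?case using dz[OF m1] by (simp add: algebra_simps)
    qed
  qed
  from this[rule_format, of "b - m"] m show ?thesis by auto
qed

lemma fp_props:
  assumes fp: "is_fixed_point b l y" and l: "0 \<le> l" "l \<le> 1"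
  shows "\<And>m. m \<in> {1..b} \<Longrightarrow> ext b y m \<le> (ext b y (m - 1))\<^sup>2"
    and "ext b y 1 \<le> l"
proof -
  have ys: "y \<in> simplexS b" using fp unfolding is_fixed_point_def by auto
  fix m assume m: "m \<in> {1..b}"
  have a1: "ext b y b \<le> ext b y (m-1)" using ext_antimono[OF ys, of "m-1" b] m by auto
  have a2: "0 \<le> ext b y b" by (rule ext_nonneg[OF ys])
  have a: "(ext b y b)\<^sup>2 \<le> (ext b y (m - 1))\<^sup>2" by (rule power_mono[OF a1 a2])
  have "ext b y m = l * ((ext b y (m - 1))\<^sup>2 - (ext b y b)\<^sup>2)" by (rule fp_tail[OF fp m])
  also have "\<dots> \<le> 1 * ((ext b y (m - 1))\<^sup>2 - (ext b y b)\<^sup>2)" using l a by (intro mult_right_mono) auto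
  also have "\<dots> \<le> (ext b y (m - 1))\<^sup>2" using ext_nonneg[OF ys] by simp
  finally show "ext b y m \<le> (ext b y (m - 1))\<^sup>2" .
next
  have ys: "y \<in> simplexS b" using fp unfolding is_fixed_point_def by auto
  show "ext b y 1 \<le> l"
  proof (cases "b \<ge> 1")
    case True
    hence "ext b y 1 = l * (1 - (ext b y b)\<^sup>2)" using fp_tail[OF fp, of 1] by simp
    also have "\<dots> \<le> l * 1" using l by (intro mult_left_mono) auto
    finally show ?thesis by simp
  next
    case False thus ?thesis using l by (simp add: ext_def)
  qed
qed

lemma fp_pow:
  assumes fp: "is_fixed_point b l y" and l: "0 \<le> l" "l \<le> 1"
  shows "m \<in> {1..b} \<Longrightarrow> ext b y m \<le> l ^ (2 ^ (m - 1))"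
proof (induction m)
  case 0 thus ?case by simp
next
  case (Suc m)
  have ys: "y \<in> simplexS b" using fp unfolding is_fixed_point_def by auto
  show ?case
  proof (cases "m = 0")
    case True thus ?thesis using fp_props(2)[OF fp l] by simp
  next
    case False
    hence m: "m \<in> {1..b}" using Suc.prems by auto
    have "ext b y (Suc m) \<le> (ext b y m)\<^sup>2" using fp_props(1)[OF fp l Suc.prems] by simp
    also have "\<dots> \<le> (l ^ (2 ^ (m - 1)))\<^sup>2" using Suc.IH[OF m] ext_nonneg[OF ys] by (intro power_mono) auto
    also have "\<dots> = l ^ (2 ^ (Suc m - 1))" using False
      by (cases m) (auto simp: power_mult[symmetric] mult.commute)
    finally show ?thesis .
  qed
qed

lemma bern:
  fixes l :: real
  assumes "0 \<le> l" "l \<le> 1"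
  shows "l ^ n * (1 + real n * (1 - l)) \<le> 1"
proof -
  have "1 + real n * (1 - l) \<le> (1 + (1 - l)) ^ n" by (rule Bernoulli_inequality) (use assms in auto)
  hence "l ^ n * (1 + real n * (1 - l)) \<le> l ^ n * (1 + (1 - l)) ^ n" using assms by (intro mult_left_mono) auto
  also have "\<dots> = (l * (2 - l)) ^ n" by (simp add: power_mult_distrib)
  also have "\<dots> \<le> 1 ^ n" proof (intro power_mono)
    have "l * (2 - l) = 1 - (1 - l)\<^sup>2" by (simp add: power2_eq_square algebra_simps)
    thus "l * (2 - l) \<le> 1" by simp
  qed (use assms in auto)
  finally show ?thesis by simp
qed

lemma telescope:
  fixes Y :: "nat \<Rightarrow> real"
  shows "(\<Sum>i\<in>{1..<Suc n}. Y i - Y (Suc i)) = Y 1 - Y (Suc n)"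
  by (induction n) auto

lemma prod_bound:
  fixes Y :: "nat \<Rightarrow> real" and X :: real
  assumes Y0: "\<And>i. 0 \<le> Y i" and Y1: "\<And>i. Y i \<le> 1" and Ym: "\<And>i. Y (Suc i) \<le> Y i"
    and Ysq: "\<And>i. i \<in> {1..<b} \<Longrightarrow> Y (Suc i) \<le> (Y i)\<^sup>2"
    and YX: "\<And>i. i \<in> {1..<b} \<Longrightarrow> Y i > 1/2 \<Longrightarrow> 2 ^ (i - 1) < X"
    and X: "X \<ge> 1/2"
  shows "(\<Prod>i\<in>{1..<b}. 1 + Y i) \<le> exp 2 * (2 * X)"
proof -
  let ?S = "{i\<in>{1..<b}. Y i > 1/2}"
  have fac: "1 + Y i \<le> (if Y i > 1/2 then 2 else 1) * exp (2 * (Y i - Y (Suc i)))" if i: "i \<in> {1..<b}" for i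
  proof (cases "Y i > 1/2")
    case True
    have e: "exp (2 * (Y i - Y (Suc i))) \<ge> 1" using Ym[of i] by simp
    have "1 + Y i \<le> 2 * exp (2 * (Y i - Y (Suc i)))" using e Y1[of i] by linarith
    thus ?thesis using True by simp
  next
    case False
    have "Y (Suc i) \<le> Y i * Y i" using Ysq[OF i] by (simp add: power2_eq_square)
    also have "\<dots> \<le> Y i * (1/2)" using False Y0[of i] by (intro mult_left_mono) auto
    finally have "Y i \<le> 2 * (Y i - Y (Suc i))" by simp
    hence "1 + Y i \<le> exp (2 * (Y i - Y (Suc i)))"
      using exp_ge_add_one_self[of "Y i"] exp_le_cancel_iff[of "Y i" "2 * (Y i - Y (Suc i))"] by linarith
    thus ?thesis using False by simp
  qed
  have P1: "(\<Prod>i\<in>{1..<b}. 1 + Y i) \<le> (\<Prod>i\<in>{1..<b}. (if Y i > 1/2 then 2 else 1) * exp (2 * (Y i - Y (Suc i))))"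
    by (intro prod_mono) (use fac Y0 in \<open>auto intro: add_nonneg_nonneg\<close>)
  also have "\<dots> = (\<Prod>i\<in>{1..<b}. (if Y i > 1/2 then 2 else 1)) * exp (2 * (\<Sum>i\<in>{1..<b}. Y i - Y (Suc i)))"
    by (simp add: prod.distrib exp_sum sum_distrib_left)
  finally have P1': "(\<Prod>i\<in>{1..<b}. 1 + Y i) \<le> (\<Prod>i\<in>{1..<b}. (if Y i > 1/2 then 2 else 1::real)) * exp (2 * (\<Sum>i\<in>{1..<b}. Y i - Y (Suc i)))" .
  have "(\<Sum>i\<in>{1..<b}. Y i - Y (Suc i)) \<le> 1"
  proof (cases b)
    case 0 thus ?thesis by simp
  next
    case (Suc n) thus ?thesis using telescope[of Y n] Y0[of "Suc n"] Y1[of 1] by simp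
  qed
  hence P2: "exp (2 * (\<Sum>i\<in>{1..<b}. Y i - Y (Suc i))) \<le> exp 2" by simp
  have P3: "(\<Prod>i\<in>{1..<b}. (if Y i > 1/2 then 2 else 1::real)) = (2::real) ^ card ?S"
  proof -
    have "{1..<b} \<inter> {i. Y i > 1/2} = ?S" by auto
    thus ?thesis by (simp add: prod.If_cases)
  qed
  have A: "(\<Prod>i\<in>{1..<b}. 1 + Y i) \<le> 2 ^ card ?S * exp 2"
    using P1' P2 unfolding P3 by (smt (verit) mult_left_mono zero_le_power)
  have B: "(2::real) ^ card ?S \<le> 2 * X"
  proof (cases "?S = {}")
    case True show ?thesis by (subst True) (use X in simp)
  next
    case False
    have fin: "finite ?S" by simp
    let ?M = "Max ?S"
    have Mi: "?M \<in> ?S" using Max_in[OF fin False] .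
    have "?S \<subseteq> {1..?M}" using Max_ge[OF fin] by auto
    hence "card ?S \<le> ?M" using card_mono[of "{1..?M}" ?S] by simp
    hence "(2::real) ^ card ?S \<le> 2 ^ ?M" by (intro power_increasing) auto
    also have "\<dots> = 2 * 2 ^ (?M - 1)" using Mi by (cases ?M) auto
    also have "\<dots> < 2 * X" using YX[of ?M] Mi by auto
    finally show ?thesis by simp
  qed
  show ?thesis using A B by (smt (verit) exp_gt_zero mult_left_mono mult.commute)
qed

definition LL :: "nat \<Rightarrow> (nat \<Rightarrow> real) \<Rightarrow> real \<Rightarrow> (nat \<Rightarrow> real) \<Rightarrow> (nat \<Rightarrow> real) \<Rightarrow> real" where
  "LL b v e y z = (\<Sum>k\<in>{1..b}. v k * hub e (z k - y k))"

lemma LL_upd: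
  assumes k: "k \<in> {1..b}"
  shows "LL b v e y (x(k := w)) = LL b v e y x + v k * (hub e (w - y k) - hub e (x k - y k))"
proof -
  have f: "finite {1..b}" by simp
  have "LL b v e y (x(k := w)) = v k * hub e (w - y k) + (\<Sum>i\<in>{1..b} - {k}. v i * hub e ((x(k := w)) i - y i))"
    unfolding LL_def using sum.remove[OF f k, of "\<lambda>i. v i * hub e ((x(k := w)) i - y i)"] by simp
  also have "(\<Sum>i\<in>{1..b} - {k}. v i * hub e ((x(k := w)) i - y i)) = (\<Sum>i\<in>{1..b} - {k}. v i * hub e (x i - y i))"
    by (intro sum.cong) auto
  also have "\<dots> = LL b v e y x - v k * hub e (x k - y k)"
    unfolding LL_def using sum.remove[OF f k, of "\<lambda>i. v i * hub e (x i - y i)"] by simp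
  finally have "LL b v e y (x(k := w)) = v k * hub e (w - y k) + (LL b v e y x - v k * hub e (x k - y k))" .
  thus ?thesis unfolding right_diff_distrib by linarith
qed

lemma LL_nonneg: "e > 0 \<Longrightarrow> (\<And>k. v k \<ge> 0) \<Longrightarrow> LL b v e y x \<ge> 0"
  unfolding LL_def by (intro sum_nonneg mult_nonneg_nonneg) (auto intro: hub_bounds)

lemma amgm_c:
  fixes c L E :: real
  assumes "c > 0"
  shows "2 * L * E \<le> c * L\<^sup>2 + E\<^sup>2 / c"
proof -
  have "c * L\<^sup>2 + E\<^sup>2 / c - 2 * L * E = (c * L - E)\<^sup>2 / c" using assms
    by (simp add: field_simps power2_eq_square)
  moreover have "(c * L - E)\<^sup>2 / c \<ge> 0" using assms by simp
  ultimately show ?thesis by linarith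
qed

lemma per_k:
  fixes N :: nat and L v g d al be e :: real
  assumes N: "N \<ge> 1" and e: "e > 0" and he: "1 / real N \<le> e"
    and L: "L \<ge> 0" and v: "v \<ge> 0" and al: "al \<ge> 0" and be: "be \<ge> 0"
    and g: "g = hubd e d"
  shows "real N * al * ((L + v * (hub e (d + 1 / real N) - hub e d))\<^sup>2 - L\<^sup>2)
       + real N * be * ((L + v * (hub e (d - 1 / real N) - hub e d))\<^sup>2 - L\<^sup>2)
     \<le> 2 * L * (v * g * (al - be)) + 2 * L * (v * (al + be) * (1 / real N) / (2 * e))
       + (al + be) * v\<^sup>2 * (1 / real N)"
proof -
  define h where "h = 1 / real N"
  have hpos: "h > 0" using N unfolding h_def by simp
  have Nh: "real N * h = 1" using N unfolding h_def by simp
  define Du where "Du = v * (hub e (d + h) - hub e d)"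
  define Dd where "Dd = v * (hub e (d - h) - hub e d)"
  have t1: "hub e (d + h) \<le> hub e d + g * h + h\<^sup>2 / (2*e)"
    using hub_taylor[OF e, of h d] he hpos g unfolding h_def by auto
  have t2: "hub e (d + (-h)) \<le> hub e d + g * (-h) + (-h)\<^sup>2 / (2*e)"
    using hub_taylor[OF e, of "-h" d] he hpos g unfolding h_def by auto
  have Du1: "Du \<le> v * (g * h + h\<^sup>2 / (2*e))" unfolding Du_def
  proof (rule mult_left_mono)
    show "hub e (d + h) - hub e d \<le> g * h + h\<^sup>2 / (2*e)" using t1 by linarith
  qed (rule v)
  have Dd1: "Dd \<le> v * (- g * h + h\<^sup>2 / (2*e))" unfolding Dd_def
  proof (rule mult_left_mono)
    show "hub e (d - h) - hub e d \<le> - g * h + h\<^sup>2 / (2*e)" using t2 by simp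
  qed (rule v)
  have Du2: "Du\<^sup>2 \<le> v\<^sup>2 * h\<^sup>2"
  proof -
    have "\<bar>hub e (d + h) - hub e d\<bar> \<le> h" using hub_lip[OF e, of "d+h" d] hpos by simp
    hence "\<bar>Du\<bar> \<le> v * h" unfolding Du_def using v by (simp add: abs_mult mult_left_mono)
    hence "Du\<^sup>2 \<le> (v * h)\<^sup>2" by (metis abs_ge_zero abs_le_square_iff abs_of_nonneg order_trans)
    thus ?thesis by (simp add: power_mult_distrib)
  qed
  have Dd2: "Dd\<^sup>2 \<le> v\<^sup>2 * h\<^sup>2"
  proof -
    have "\<bar>hub e (d - h) - hub e d\<bar> \<le> h" using hub_lip[OF e, of "d-h" d] hpos by simp
    hence "\<bar>Dd\<bar> \<le> v * h" unfolding Dd_def using v by (simp add: abs_mult mult_left_mono)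
    hence "Dd\<^sup>2 \<le> (v * h)\<^sup>2" by (metis abs_ge_zero abs_le_square_iff abs_of_nonneg order_trans)
    thus ?thesis by (simp add: power_mult_distrib)
  qed
  have "(L + Du)\<^sup>2 - L\<^sup>2 = 2 * L * Du + Du\<^sup>2" by (simp add: power2_eq_square algebra_simps)
  also have "\<dots> \<le> 2 * L * (v * (g * h + h\<^sup>2 / (2*e))) + v\<^sup>2 * h\<^sup>2"
    using Du1 Du2 L by (intro add_mono mult_left_mono) auto
  finally have U: "(L + Du)\<^sup>2 - L\<^sup>2 \<le> 2 * L * (v * (g * h + h\<^sup>2 / (2*e))) + v\<^sup>2 * h\<^sup>2" .
  have "(L + Dd)\<^sup>2 - L\<^sup>2 = 2 * L * Dd + Dd\<^sup>2" by (simp add: power2_eq_square algebra_simps)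
  also have "\<dots> \<le> 2 * L * (v * (- g * h + h\<^sup>2 / (2*e))) + v\<^sup>2 * h\<^sup>2"
    using Dd1 Dd2 L by (intro add_mono mult_left_mono) auto
  finally have D: "(L + Dd)\<^sup>2 - L\<^sup>2 \<le> 2 * L * (v * (- g * h + h\<^sup>2 / (2*e))) + v\<^sup>2 * h\<^sup>2" .
  have Na: "real N * al \<ge> 0" "real N * be \<ge> 0" using al be by auto
  have "real N * al * ((L + Du)\<^sup>2 - L\<^sup>2) + real N * be * ((L + Dd)\<^sup>2 - L\<^sup>2)
     \<le> real N * al * (2 * L * (v * (g * h + h\<^sup>2 / (2*e))) + v\<^sup>2 * h\<^sup>2)
       + real N * be * (2 * L * (v * (- g * h + h\<^sup>2 / (2*e))) + v\<^sup>2 * h\<^sup>2)"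
    using U D Na by (intro add_mono mult_left_mono) auto
  also have "\<dots> = 2 * L * (v * g * (al - be)) * (real N * h) + 2 * L * (v * (al + be) * h / (2 * e)) * (real N * h)
       + (al + be) * v\<^sup>2 * h * (real N * h)"
  proof -
    define q where "q = h / (2 * e)"
    have q1: "h\<^sup>2 / (2*e) = h * q" unfolding q_def by (simp add: power2_eq_square)
    have q2: "v * (al + be) * h / (2 * e) = v * (al + be) * q" unfolding q_def by simp
    show ?thesis unfolding q1 q2 by algebra
  qed
  also have "\<dots> = 2 * L * (v * g * (al - be)) + 2 * L * (v * (al + be) * h / (2 * e)) + (al + be) * v\<^sup>2 * h"
    unfolding Nh by simp
  finally show ?thesis unfolding Du_def Dd_def h_def by simp
qed

lemma gen_bound:
  fixes N b :: nat and l c :: real and v :: "nat \<Rightarrow> real" and x y :: "nat \<Rightarrow> real"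
  assumes N: "N \<ge> 1" and x: "x \<in> state_space N b" and fp: "is_fixed_point b l y"
    and l0: "0 \<le> l" and l1: "l \<le> 1"
    and v0: "v 0 = 0" and vb: "v (b + 1) = 0" and vpos: "\<And>k. v k \<ge> 0" and c: "c > 0"
    and w: "\<And>k q. k \<in> {1..b} \<Longrightarrow> 0 \<le> q \<Longrightarrow> q \<le> 1 + ext b y k \<Longrightarrow>
              (v (k - 1) - v k) + q * (v (k + 1) - v k) \<le> - c * v k"
    and e: "e = 1 / sqrt (real N)"
  shows "gen N b l (\<lambda>z. (LL b v e y z)\<^sup>2) x
     \<le> - c * (LL b v e y x)\<^sup>2 + ((3 * e + (1 / real N) / e) * (\<Sum>k\<in>{1..b}. v k))\<^sup>2 / c
        + 2 * (\<Sum>k\<in>{1..b}. (v k)\<^sup>2) / real N"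
proof -
  let ?L = "LL b v e y x"
  let ?X = "ext b x" and ?Y = "ext b y"
  define al where "al k = l * ((?X (k - 1))\<^sup>2 - (?X k)\<^sup>2)" for k
  define be where "be k = ?X k - ?X (k + 1)" for k
  define d where "d k = ?X k - ?Y k" for k
  define g where "g k = hubd e (d k)" for k
  define p where "p k = l * (?X k + ?Y k)" for k
  define SV where "SV = (\<Sum>k\<in>{1..b}. v k)"
  define SV2 where "SV2 = (\<Sum>k\<in>{1..b}. (v k)\<^sup>2)"
  have xs: "x \<in> simplexS b" using x unfolding state_space_def by auto
  have ys: "y \<in> simplexS b" using fp unfolding is_fixed_point_def by auto
  have epos: "e > 0" using N e by simp
  have he: "1 / real N \<le> e"
  proof -
    have "sqrt (real N) \<le> real N"
    proof -
      have "sqrt (real N) * 1 \<le> sqrt (real N) * sqrt (real N)" using N by (intro mult_left_mono) auto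
      thus ?thesis using N by simp
    qed
    thus ?thesis unfolding e using N by (intro divide_left_mono) auto
  qed
  have Lnn: "?L \<ge> 0" using LL_nonneg[OF epos vpos] .
  have alnn: "al k \<ge> 0" "al k \<le> 1" for k
  proof -
    have a: "?X k \<le> ?X (k - 1)" using ext_antimono[OF xs, of "k-1" k] by simp
    have b0: "0 \<le> ?X k" by (rule ext_nonneg[OF xs])
    have sq: "(?X k)\<^sup>2 \<le> (?X (k - 1))\<^sup>2" by (rule power_mono[OF a b0])
    show "al k \<ge> 0" unfolding al_def using sq l0 by simp
    have "(?X (k - 1))\<^sup>2 \<le> 1" using ext_le1[OF xs] ext_nonneg[OF xs] by (simp add: power_le_one)
    hence "(?X (k - 1))\<^sup>2 - (?X k)\<^sup>2 \<le> 1" using b0 by (smt (verit) zero_le_power2)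
    hence "l * ((?X (k - 1))\<^sup>2 - (?X k)\<^sup>2) \<le> 1 * 1" using l0 l1 sq
      by (intro mult_mono) auto
    thus "al k \<le> 1" unfolding al_def by simp
  qed
  have benn: "be k \<ge> 0" "be k \<le> 1" for k
  proof -
    show "be k \<ge> 0" unfolding be_def using ext_Suc_le[OF xs, of k] by simp
    show "be k \<le> 1" unfolding be_def using ext_le1[OF xs, of k] ext_nonneg[OF xs, of "k+1"] by simp
  qed
  have ab2: "al k + be k \<le> 2" for k using alnn(2)[of k] benn(2)[of k] by linarith
  have gen_eq: "gen N b l (\<lambda>z. (LL b v e y z)\<^sup>2) x = (\<Sum>k\<in>{1..b}.
      real N * al k * ((?L + v k * (hub e (d k + 1 / real N) - hub e (d k)))\<^sup>2 - ?L\<^sup>2)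
    + real N * be k * ((?L + v k * (hub e (d k - 1 / real N) - hub e (d k)))\<^sup>2 - ?L\<^sup>2))"
    unfolding gen_formula[OF x N]
  proof (intro sum.cong refl)
    fix k assume k: "k \<in> {1..b}"
    have u: "LL b v e y (x(k := x k + 1 / real N)) = ?L + v k * (hub e (d k + 1 / real N) - hub e (d k))"
      unfolding LL_upd[OF k] d_def using k by (simp add: algebra_simps)
    have dn: "LL b v e y (x(k := x k - 1 / real N)) = ?L + v k * (hub e (d k - 1 / real N) - hub e (d k))"
      unfolding LL_upd[OF k] d_def using k by (simp add: algebra_simps)
    show "l * real N * ((?X (k - 1))\<^sup>2 - (?X k)\<^sup>2) * ((LL b v e y (x(k := x k + 1 / real N)))\<^sup>2 - ?L\<^sup>2)
        + real N * (?X k - ?X (k + 1)) * ((LL b v e y (x(k := x k - 1 / real N)))\<^sup>2 - ?L\<^sup>2)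
      = real N * al k * ((?L + v k * (hub e (d k + 1 / real N) - hub e (d k)))\<^sup>2 - ?L\<^sup>2)
        + real N * be k * ((?L + v k * (hub e (d k - 1 / real N) - hub e (d k)))\<^sup>2 - ?L\<^sup>2)"
      unfolding u dn al_def be_def by (simp add: mult.commute mult.left_commute)
  qed
  also have "\<dots> \<le> (\<Sum>k\<in>{1..b}. 2 * ?L * (v k * g k * (al k - be k))
      + 2 * ?L * (v k * (al k + be k) * (1 / real N) / (2 * e)) + (al k + be k) * (v k)\<^sup>2 * (1 / real N))"
    by (intro sum_mono per_k[OF N epos he Lnn vpos alnn(1) benn(1)]) (simp add: g_def)
  also have "\<dots> = 2 * ?L * (\<Sum>k\<in>{1..b}. v k * g k * (al k - be k))
      + 2 * ?L * (\<Sum>k\<in>{1..b}. v k * (al k + be k) * (1 / real N) / (2 * e))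
      + (\<Sum>k\<in>{1..b}. (al k + be k) * (v k)\<^sup>2 * (1 / real N))"
    by (simp add: sum.distrib sum_distrib_left)
  also have "(\<Sum>k\<in>{1..b}. v k * (al k + be k) * (1 / real N) / (2 * e)) \<le> (\<Sum>k\<in>{1..b}. v k * 2 * (1 / real N) / (2 * e))"
    using vpos alnn benn epos
    by (intro sum_mono divide_right_mono mult_right_mono mult_left_mono) (auto simp: ab2)
  also have "(\<Sum>k\<in>{1..b}. v k * 2 * (1 / real N) / (2 * e)) = (1 / real N) / e * SV"
    unfolding SV_def by (simp add: sum_distrib_left sum_divide_distrib field_simps)
  also have "(\<Sum>k\<in>{1..b}. (al k + be k) * (v k)\<^sup>2 * (1 / real N)) \<le> (\<Sum>k\<in>{1..b}. 2 * (v k)\<^sup>2 * (1 / real N))"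
    using alnn benn by (intro sum_mono mult_right_mono) (auto simp: ab2)
  also have "(\<Sum>k\<in>{1..b}. 2 * (v k)\<^sup>2 * (1 / real N)) = 2 * SV2 / real N"
    unfolding SV2_def by (simp add: sum_distrib_left sum_divide_distrib)
  also have "(\<Sum>k\<in>{1..b}. v k * g k * (al k - be k)) \<le> - c * ?L + e * (3 * SV)"
  proof -
    have id: "al k - be k = p (k - 1) * d (k - 1) - (1 + p k) * d k + d (k + 1)" if k: "k \<in> {1..b}" for k
    proof -
      have "drift b l y k = 0" using fp k unfolding is_fixed_point_def by blast
      hence "al k - be k = drift b l x k - drift b l y k" unfolding al_def be_def drift_def by simp
      also have "\<dots> = p (k - 1) * d (k - 1) - (1 + p k) * d k + d (k + 1)"
        unfolding drift_def p_def d_def using k by (simp add: power2_eq_square algebra_simps)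
      finally show ?thesis .
    qed
    have "(\<Sum>k\<in>{1..b}. v k * g k * (al k - be k))
        = (\<Sum>k\<in>{1..b}. v k * g k * (p (k - 1) * d (k - 1) - (1 + p k) * d k + d (k + 1)))"
      by (intro sum.cong refl) (simp add: id)
    also have "\<dots> \<le> - c * (\<Sum>k\<in>{1..b}. v k * \<bar>d k\<bar>) + e * (\<Sum>k\<in>{1..b}. v k * (1 + p k))"
    proof (rule drift_abs)
      show "d 0 = 0" unfolding d_def by simp
      show "d (b + 1) = 0" unfolding d_def by simp
      show "v 0 = 0" by (rule v0)
      show "v (b + 1) = 0" by (rule vb)
      show "\<bar>g k\<bar> \<le> 1" for k unfolding g_def using hubd_props(1)[OF epos] .
      show "\<bar>d k\<bar> - e \<le> g k * d k" for k unfolding g_def using hubd_props(2)[OF epos] .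
      show "0 \<le> v k" for k by (rule vpos)
      show "0 \<le> p k" for k unfolding p_def using l0 ext_nonneg[OF xs] ext_nonneg[OF ys] by simp
      fix k assume k: "k \<in> {1..b}"
      show "v (k - 1) - v k + p k * (v (k + 1) - v k) \<le> - c * v k"
      proof (rule w[OF k])
        show "0 \<le> p k" unfolding p_def using l0 ext_nonneg[OF xs] ext_nonneg[OF ys] by simp
        have "p k \<le> 1 * (1 + ?Y k)" unfolding p_def using l0 l1 ext_le1[OF xs, of k] ext_nonneg[OF xs, of k] ext_nonneg[OF ys, of k]
          by (intro mult_mono) auto
        thus "p k \<le> 1 + ?Y k" by simp
      qed
    qed
    also have "(\<Sum>k\<in>{1..b}. v k * \<bar>d k\<bar>) \<ge> ?L"
      unfolding LL_def d_def using vpos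
      by (intro sum_mono mult_left_mono) (auto intro: hub_bounds(2)[OF epos])
    hence "- c * (\<Sum>k\<in>{1..b}. v k * \<bar>d k\<bar>) \<le> - c * ?L" using c by simp
    also have "(\<Sum>k\<in>{1..b}. v k * (1 + p k)) \<le> (\<Sum>k\<in>{1..b}. v k * 3)"
    proof (intro sum_mono mult_left_mono)
      fix k
      have "p k \<le> 1 * (1 + 1)" unfolding p_def using l0 l1 ext_le1[OF xs, of k] ext_le1[OF ys, of k]
        by (intro mult_mono) (auto intro: add_mono add_nonneg_nonneg ext_nonneg[OF xs] ext_nonneg[OF ys])
      thus "1 + p k \<le> 3" by simp
    qed (rule vpos)
    hence "e * (\<Sum>k\<in>{1..b}. v k * (1 + p k)) \<le> e * (3 * SV)" unfolding SV_def using epos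
      by (simp add: sum_distrib_right[symmetric] mult.commute)
    finally show ?thesis by simp
  qed
  finally have G: "gen N b l (\<lambda>z. (LL b v e y z)\<^sup>2) x
      \<le> 2 * ?L * (- c * ?L + e * (3 * SV)) + 2 * ?L * ((1 / real N) / e * SV) + 2 * SV2 / real N"
    using Lnn by (smt (verit) mult_left_mono)
  have "2 * ?L * (- c * ?L + e * (3 * SV)) + 2 * ?L * ((1 / real N) / e * SV)
      = - 2 * c * ?L\<^sup>2 + 2 * ?L * ((3 * e + (1 / real N) / e) * SV)"
    by (simp add: power2_eq_square algebra_simps)
  also have "\<dots> \<le> - 2 * c * ?L\<^sup>2 + (c * ?L\<^sup>2 + ((3 * e + (1 / real N) / e) * SV)\<^sup>2 / c)"
    using amgm_c[OF c] by simp
  finally show ?thesis using G unfolding SV_def SV2_def by simp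
qed

definition dl :: "nat \<Rightarrow> (nat \<Rightarrow> real) \<Rightarrow> nat \<Rightarrow> real" where
  "dl b y k = (1 + 1 / real b) ^ (b - k) * (\<Prod>i\<in>{k..<b}. 1 + ext b y i)"

definition vw :: "nat \<Rightarrow> (nat \<Rightarrow> real) \<Rightarrow> nat \<Rightarrow> real" where
  "vw b y k = (if k \<le> b then (\<Sum>i\<in>{1..k}. dl b y i) else 0)"

context
  fixes b :: nat and y :: "nat \<Rightarrow> real"
  assumes b: "b \<ge> 1" and ys: "y \<in> simplexS b"
begin

lemma dl_ge1: "dl b y k \<ge> 1"
proof -
  have a: "1 \<le> (1 + 1 / real b) ^ (b - k)" by (rule one_le_power) simp
  have c: "1 \<le> (\<Prod>i\<in>{k..<b}. 1 + ext b y i)"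
    by (rule prod_ge_1) (use ext_nonneg[OF ys] in auto)
  have "(1::real) * 1 \<le> (1 + 1 / real b) ^ (b - k) * (\<Prod>i\<in>{k..<b}. 1 + ext b y i)"
    by (rule mult_mono[OF a c]) auto
  thus ?thesis unfolding dl_def by simp
qed

lemma dl_nonneg: "dl b y k \<ge> 0" using dl_ge1[of k] by linarith

lemma dl_step: "k < b \<Longrightarrow> dl b y k = (1 + 1 / real b) * (1 + ext b y k) * dl b y (k + 1)"
proof -
  assume k: "k < b"
  have e: "b - k = Suc (b - (k + 1))" using k by simp
  show ?thesis unfolding dl_def e prod.atLeast_Suc_lessThan[OF k] by (simp add: algebra_simps)
qed

lemma dl_b: "dl b y b = 1" unfolding dl_def by simp

lemma dl_le1: "k \<in> {1..b} \<Longrightarrow> dl b y k \<le> dl b y 1"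
proof (induction k)
  case 0 thus ?case by simp
next
  case (Suc k)
  show ?case
  proof (cases "k = 0")
    case True thus ?thesis by simp
  next
    case False
    hence k: "k \<in> {1..b}" "k < b" using Suc.prems by auto
    have "dl b y (Suc k) = 1 * dl b y (Suc k)" by simp
    also have "\<dots> \<le> ((1 + 1 / real b) * (1 + ext b y k)) * dl b y (Suc k)"
    proof (rule mult_right_mono)
      show "1 \<le> (1 + 1 / real b) * (1 + ext b y k)"
      proof -
        have "(1::real) * 1 \<le> (1 + 1 / real b) * (1 + ext b y k)"
          using ext_nonneg[OF ys, of k] by (intro mult_mono) auto
        thus ?thesis by simp
      qed
    qed (rule dl_nonneg)
    also have "\<dots> = dl b y k" using dl_step[OF k(2)] by simp
    also have "\<dots> \<le> dl b y 1" using Suc.IH[OF k(1)] .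
    finally show ?thesis .
  qed
qed

lemma vw_0: "vw b y 0 = 0" unfolding vw_def by simp
lemma vw_b1: "vw b y (b + 1) = 0" unfolding vw_def by simp
lemma vw_nonneg: "vw b y k \<ge> 0"
  unfolding vw_def using dl_nonneg by (auto intro: sum_nonneg)
lemma vw_Suc: "Suc k \<le> b \<Longrightarrow> vw b y (Suc k) = vw b y k + dl b y (Suc k)"
  unfolding vw_def by simp
lemma vw_mono: "k \<le> b \<Longrightarrow> vw b y k \<le> vw b y b"
  unfolding vw_def using dl_nonneg
  by (auto intro!: sum_mono2)
lemma vw_ge: "k \<in> {1..b} \<Longrightarrow> vw b y k \<ge> dl b y 1"
proof -
  assume k: "k \<in> {1..b}"
  have "dl b y 1 = (\<Sum>i\<in>{1..1}. dl b y i)" by simp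
  also have "\<dots> \<le> (\<Sum>i\<in>{1..k}. dl b y i)" using k dl_nonneg
    by (intro sum_mono2) auto
  finally show ?thesis unfolding vw_def using k by simp
qed
lemma vw_le: "vw b y b \<le> real b * dl b y 1"
proof -
  have "vw b y b = (\<Sum>i\<in>{1..b}. dl b y i)" unfolding vw_def by simp
  also have "\<dots> \<le> (\<Sum>i\<in>{1..b}. dl b y 1)" by (intro sum_mono dl_le1) auto
  finally show ?thesis by simp
qed

lemma vw_weights:
  assumes k: "k \<in> {1..b}" and q0: "0 \<le> q" and q1: "q \<le> 1 + ext b y k"
  shows "(vw b y (k - 1) - vw b y k) + q * (vw b y (k + 1) - vw b y k)
         \<le> - (1 / ((real b + 1) * vw b y b)) * vw b y k"
proof -
  let ?V = "vw b y b"
  have Vpos: "?V \<ge> 1" using vw_ge[of b] dl_ge1[of 1] b by auto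
  have km: "vw b y k = vw b y (k - 1) + dl b y k" using vw_Suc[of "k - 1"] k by simp
  have rhs: "- (1 / ((real b + 1) * ?V)) * vw b y k \<ge> - 1 / (real b + 1)"
  proof -
    have "vw b y k / ?V \<le> 1" using vw_mono[of k] k Vpos by simp
    have "vw b y k / ((real b + 1) * ?V) = (vw b y k / ?V) / (real b + 1)" by simp
    also have "\<dots> \<le> 1 / (real b + 1)" using \<open>vw b y k / ?V \<le> 1\<close> by (intro divide_right_mono) auto
    finally have "vw b y k / ((real b + 1) * ?V) \<le> 1 / (real b + 1)" .
    thus ?thesis by simp
  qed
  show ?thesis
  proof (cases "k < b")
    case True
    have ks: "vw b y (k + 1) = vw b y k + dl b y (k + 1)" using vw_Suc[of k] True by simp
    have st: "dl b y k = (1 + 1 / real b) * (1 + ext b y k) * dl b y (k + 1)" by (rule dl_step[OF True])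
    have "q * dl b y (k + 1) \<le> (1 + ext b y k) * dl b y (k + 1)"
      using q1 dl_ge1[of "k+1"] by (intro mult_right_mono) auto
    also have "\<dots> = dl b y k * (real b / (real b + 1))"
    proof -
      have bp: "real b > 0" using b by simp
      have t1: "1 + 1 / real b = (real b + 1) / real b" using bp by (simp add: field_simps)
      have th: "(1 + 1 / real b) * (real b / (real b + 1)) = 1" unfolding t1 using bp by simp
      have "dl b y k * (real b / (real b + 1)) = (1 + ext b y k) * dl b y (k + 1) * ((1 + 1 / real b) * (real b / (real b + 1)))"
        unfolding st by (simp only: mult_ac)
      thus ?thesis unfolding th by simp
    qed
    finally have qa: "q * dl b y (k + 1) \<le> dl b y k * (real b / (real b + 1))" .
    have "(vw b y (k - 1) - vw b y k) + q * (vw b y (k + 1) - vw b y k) = - dl b y k + q * dl b y (k + 1)"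
      using km ks by simp
    also have "\<dots> \<le> - dl b y k + dl b y k * (real b / (real b + 1))" using qa by simp
    also have "\<dots> = - dl b y k * (1 / (real b + 1))" by (simp add: field_simps)
    also have "\<dots> \<le> - 1 * (1 / (real b + 1))" using dl_ge1[of k] by (intro mult_right_mono) auto
    also have "\<dots> \<le> - (1 / ((real b + 1) * ?V)) * vw b y k" using rhs by simp
    finally show ?thesis .
  next
    case False
    hence kb: "k = b" using k by simp
    have "(vw b y (k - 1) - vw b y k) + q * (vw b y (k + 1) - vw b y k) = - dl b y b - q * ?V"
      using km kb vw_b1 by (simp add: algebra_simps)
    also have "\<dots> \<le> - 1" using dl_b q0 Vpos by simp
    also have "\<dots> \<le> - 1 / (real b + 1)" by (simp add: field_simps)
    also have "\<dots> \<le> - (1 / ((real b + 1) * ?V)) * vw b y k" using rhs .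
    finally show ?thesis .
  qed
qed

end

lemma sum_sq_le:
  fixes a :: "nat \<Rightarrow> real"
  assumes "finite A" "\<And>k. k \<in> A \<Longrightarrow> a k \<ge> 0"
  shows "(\<Sum>k\<in>A. (a k)\<^sup>2) \<le> (\<Sum>k\<in>A. a k)\<^sup>2"
  using assms
proof (induction A rule: finite_induct)
  case empty thus ?case by simp
next
  case (insert j A)
  have s: "(\<Sum>k\<in>A. a k) \<ge> 0" using insert.prems by (intro sum_nonneg) auto
  have aj: "a j \<ge> 0" using insert.prems by auto
  have "(\<Sum>k\<in>insert j A. (a k)\<^sup>2) = (a j)\<^sup>2 + (\<Sum>k\<in>A. (a k)\<^sup>2)" using insert by simp
  also have "\<dots> \<le> (a j)\<^sup>2 + (\<Sum>k\<in>A. a k)\<^sup>2" using insert by simp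
  also have "\<dots> \<le> (a j + (\<Sum>k\<in>A. a k))\<^sup>2" using s aj by (simp add: power2_eq_square algebra_simps)
  also have "\<dots> = (\<Sum>k\<in>insert j A. a k)\<^sup>2" using insert by simp
  finally show ?case .
qed

lemma sq_pt:
  fixes x y v :: "nat \<Rightarrow> real" and P e :: real
  assumes P: "P > 0" and e: "e > 0" and v: "\<And>k. k \<in> {1..b} \<Longrightarrow> v k \<ge> P"
  shows "(\<Sum>k\<in>{1..b}. (x k - y k)\<^sup>2) \<le> 2 * (LL b v e y x)\<^sup>2 / P\<^sup>2 + (real b)\<^sup>2 * e\<^sup>2 / 2"
proof -
  let ?S1 = "\<Sum>k\<in>{1..b}. \<bar>x k - y k\<bar>"
  let ?L = "LL b v e y x"
  have "?L \<ge> (\<Sum>k\<in>{1..b}. P * hub e (x k - y k))"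
    unfolding LL_def using v hub_bounds(3)[OF e] by (intro sum_mono mult_right_mono) auto
  also have "(\<Sum>k\<in>{1..b}. P * hub e (x k - y k)) \<ge> (\<Sum>k\<in>{1..b}. P * (\<bar>x k - y k\<bar> - e / 2))"
    using P hub_bounds(1)[OF e] by (intro sum_mono mult_left_mono) auto
  also have "(\<Sum>k\<in>{1..b}. P * (\<bar>x k - y k\<bar> - e / 2)) = P * (?S1 - real b * e / 2)"
    by (simp add: sum_distrib_left[symmetric] sum_subtractf)
  finally have "P * (?S1 - real b * e / 2) \<le> ?L" .
  hence "?S1 - real b * e / 2 \<le> ?L / P" using P by (simp add: field_simps)
  hence S1: "?S1 \<le> ?L / P + real b * e / 2" by simp
  have S0: "?S1 \<ge> 0" by (intro sum_nonneg) auto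
  have "(\<Sum>k\<in>{1..b}. (x k - y k)\<^sup>2) = (\<Sum>k\<in>{1..b}. \<bar>x k - y k\<bar>\<^sup>2)" by simp
  also have "\<dots> \<le> ?S1\<^sup>2" by (rule sum_sq_le) auto
  also have "\<dots> \<le> (?L / P + real b * e / 2)\<^sup>2" using S0 S1 by (intro power_mono) auto
  also have "\<dots> \<le> 2 * (?L / P)\<^sup>2 + 2 * (real b * e / 2)\<^sup>2"
  proof -
    have "0 \<le> (?L / P - real b * e / 2)\<^sup>2" by simp
    thus ?thesis by (simp add: power2_eq_square algebra_simps)
  qed
  also have "\<dots> = 2 * ?L\<^sup>2 / P\<^sup>2 + (real b)\<^sup>2 * e\<^sup>2 / 2"
    by (simp add: power_divide power_mult_distrib)
  finally show ?thesis .
qed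

lemma numeric:
  fixes b N P V SV SV2 :: real
  assumes b: "b \<ge> 1" and N: "N > 0" and P: "P \<ge> 1" and PV: "P \<le> V" and VP: "V \<le> b * P"
    and SV: "0 \<le> SV" "SV \<le> b * V" and SV2: "0 \<le> SV2" "SV2 \<le> b * V\<^sup>2"
  shows "2 * ((16 * SV\<^sup>2 * ((b + 1) * V)\<^sup>2 + 2 * SV2 * ((b + 1) * V)) / N) / P\<^sup>2 + b\<^sup>2 / (2 * N)
         \<le> 148 * b ^ 8 * P\<^sup>2 / N"
proof -
  have V0: "V \<ge> 1" using P PV by simp
  have b1: "b + 1 \<le> 2 * b" using b by simp
  have Vb: "V \<le> b * P" by (rule VP)
  have t1: "SV\<^sup>2 * ((b + 1) * V)\<^sup>2 \<le> (b * V)\<^sup>2 * ((2 * b) * V)\<^sup>2"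
    using SV b1 b V0 by (intro mult_mono power_mono) auto
  have t1': "(b * V)\<^sup>2 * ((2 * b) * V)\<^sup>2 = 4 * b^4 * V^4" by (simp add: power2_eq_square power4_eq_xxxx)
  have V4: "V ^ 4 \<le> (b * P) ^ 4" using Vb V0 by (intro power_mono) auto
  have t2: "SV2 * ((b + 1) * V) \<le> (b * V\<^sup>2) * ((2 * b) * V)"
    using SV2 b1 b V0 by (intro mult_mono) auto
  have t2': "(b * V\<^sup>2) * ((2 * b) * V) \<le> 2 * b^4 * V^4"
  proof -
    have "(b * V\<^sup>2) * ((2 * b) * V) = 2 * b^2 * V^3" by (simp add: power2_eq_square power3_eq_cube)
    also have "\<dots> \<le> 2 * b^4 * V^4"
    proof (rule mult_mono)
      show "2 * b^2 \<le> 2 * b^4" using b by (simp add: power_increasing)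
      show "V^3 \<le> V^4" using V0 by (simp add: power_increasing)
    qed (use b V0 in auto)
    finally show ?thesis .
  qed
  have num: "16 * SV\<^sup>2 * ((b + 1) * V)\<^sup>2 + 2 * SV2 * ((b + 1) * V) \<le> 68 * b^4 * (b * P) ^ 4"
  proof -
    have "16 * SV\<^sup>2 * ((b + 1) * V)\<^sup>2 + 2 * SV2 * ((b + 1) * V) \<le> 16 * (4 * b^4 * V^4) + 2 * (2 * b^4 * V^4)"
    proof -
      have e1: "16 * SV\<^sup>2 * ((b + 1) * V)\<^sup>2 = 16 * (SV\<^sup>2 * ((b + 1) * V)\<^sup>2)" by simp
      have e2: "2 * SV2 * ((b + 1) * V) = 2 * (SV2 * ((b + 1) * V))" by simp
      have u1: "SV\<^sup>2 * ((b + 1) * V)\<^sup>2 \<le> 4 * b^4 * V^4" using t1 t1' by linarith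
      have u2: "SV2 * ((b + 1) * V) \<le> 2 * b^4 * V^4" using t2 t2' by linarith
      show ?thesis unfolding e1 e2 using u1 u2 by linarith
    qed
    also have "\<dots> = 68 * b^4 * V^4" by simp
    also have "\<dots> \<le> 68 * b^4 * (b * P)^4" using V4 b by (intro mult_left_mono) auto
    finally show ?thesis .
  qed
  have "2 * ((16 * SV\<^sup>2 * ((b + 1) * V)\<^sup>2 + 2 * SV2 * ((b + 1) * V)) / N) / P\<^sup>2
      \<le> 2 * ((68 * b^4 * (b * P) ^ 4) / N) / P\<^sup>2"
    using num N P by (intro divide_right_mono mult_left_mono) auto
  also have "\<dots> = 136 * b^8 * P\<^sup>2 / N"
  proof -
    have q1: "(b * P)^4 = b^4 * P^4" by (simp add: power_mult_distrib)
    have q2: "b^8 = b^4 * b^4" by (simp add: power_add[symmetric])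
    have q3: "P^4 = P\<^sup>2 * P\<^sup>2" by (simp add: power_add[symmetric])
    have P0: "P\<^sup>2 \<noteq> 0" using P by simp
    have N0: "N \<noteq> 0" using N by simp
    have "2 * ((68 * b^4 * (b * P) ^ 4) / N) / P\<^sup>2 = (136 * b^8 * P\<^sup>2) * P\<^sup>2 / (N * P\<^sup>2)"
      unfolding q1 q2 q3 by (simp add: field_simps)
    also have "\<dots> = 136 * b^8 * P\<^sup>2 / N" using P0 N0 by simp
    finally show ?thesis .
  qed
  finally have A: "2 * ((16 * SV\<^sup>2 * ((b + 1) * V)\<^sup>2 + 2 * SV2 * ((b + 1) * V)) / N) / P\<^sup>2 \<le> 136 * b^8 * P\<^sup>2 / N" .
  have "b\<^sup>2 \<le> b^8 * P\<^sup>2"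
  proof -
    have "b\<^sup>2 \<le> b^8" using b by (intro power_increasing) auto
    also have "\<dots> \<le> b^8 * P\<^sup>2" using P b by (simp add: one_le_power)
    finally show ?thesis .
  qed
  moreover have nn: "0 \<le> b^8 * P\<^sup>2" by simp
  ultimately have h24: "b\<^sup>2 / 2 \<le> 12 * (b^8 * P\<^sup>2)" by linarith
  have "b\<^sup>2 / (2 * N) = (b\<^sup>2 / 2) / N" by simp
  also have "\<dots> \<le> (12 * (b^8 * P\<^sup>2)) / N" using h24 N by (intro divide_right_mono) auto
  finally have B: "b\<^sup>2 / (2 * N) \<le> 12 * b^8 * P\<^sup>2 / N" by (simp add: mult.assoc)
  have C: "136 * b^8 * P\<^sup>2 / N + 12 * b^8 * P\<^sup>2 / N = 148 * b^8 * P\<^sup>2 / N"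
    by (simp add: add_divide_distrib[symmetric])
  show ?thesis using add_mono[OF A B] unfolding C .
qed

lemma exp_main:
  fixes N b :: nat and l :: real and \<pi> y :: "_"
  assumes N: "N \<ge> 1" and b: "b \<ge> 1" and l0: "0 \<le> l" and l1: "l \<le> 1"
    and st: "is_stationary N b l \<pi>" and fp: "is_fixed_point b l y"
  shows "exp_sq_dist N b \<pi> y \<le> 148 * real b ^ 8 * (dl b y 1)\<^sup>2 / real N"
proof -
  have ys: "y \<in> simplexS b" using fp unfolding is_fixed_point_def by auto
  define v where "v = vw b y"
  define V where "V = v b"
  define P where "P = dl b y 1"
  define c where "c = 1 / ((real b + 1) * V)"
  define e where "e = 1 / sqrt (real N)"
  define SV where "SV = (\<Sum>k\<in>{1..b}. v k)"
  define SV2 where "SV2 = (\<Sum>k\<in>{1..b}. (v k)\<^sup>2)"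
  define K where "K = ((3 * e + (1 / real N) / e) * SV)\<^sup>2 / c + 2 * SV2 / real N"
  let ?S = "state_space N b"
  let ?L = "\<lambda>x. LL b v e y x"
  have P1: "P \<ge> 1" unfolding P_def by (rule dl_ge1[OF b ys])
  have PV: "P \<le> V" unfolding P_def V_def v_def using vw_ge[OF b ys, of b] b by auto
  have VP: "V \<le> real b * P" unfolding P_def V_def v_def by (rule vw_le[OF b ys])
  have Vpos: "V > 0" using P1 PV by simp
  have cpos: "c > 0" unfolding c_def using Vpos by simp
  have epos: "e > 0" unfolding e_def using N by simp
  have vnn: "\<And>k. v k \<ge> 0" unfolding v_def by (rule vw_nonneg[OF b ys])
  have G0: "gen N b l (\<lambda>z. (?L z)\<^sup>2) x \<le> - c * (?L x)\<^sup>2 + ((3 * e + (1 / real N) / e) * SV)\<^sup>2 / c + 2 * SV2 / real N" if x: "x \<in> ?S" for x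
    unfolding SV_def SV2_def
  proof (rule gen_bound[OF N x fp l0 l1])
    show "v 0 = 0" unfolding v_def by (rule vw_0[OF b ys])
    show "v (b + 1) = 0" unfolding v_def by (rule vw_b1[OF b ys])
    show "\<And>k. 0 \<le> v k" by (rule vnn)
    show "0 < c" by (rule cpos)
    show "e = 1 / sqrt (real N)" by (rule e_def)
    fix k q assume "k \<in> {1..b}" "0 \<le> q" "q \<le> 1 + ext b y k"
    thus "v (k - 1) - v k + q * (v (k + 1) - v k) \<le> - c * v k"
      unfolding v_def c_def V_def using vw_weights[OF b ys] by blast
  qed
  have G: "gen N b l (\<lambda>z. (?L z)\<^sup>2) x \<le> - c * (?L x)\<^sup>2 + K" if x: "x \<in> ?S" for x
    using G0[OF x] unfolding K_def by linarith
  have Z: "(\<Sum>x\<in>?S. \<pi> x * gen N b l (\<lambda>z. (?L z)\<^sup>2) x) = 0"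
    by (rule stationary_gen_zero[OF st])
  have pnn: "\<And>x. x \<in> ?S \<Longrightarrow> \<pi> x \<ge> 0" and psum: "(\<Sum>x\<in>?S. \<pi> x) = 1"
    using st unfolding is_stationary_def by auto
  have "0 \<le> (\<Sum>x\<in>?S. \<pi> x * (- c * (?L x)\<^sup>2 + K))"
    unfolding Z[symmetric] by (intro sum_mono mult_left_mono G pnn)
  also have "\<dots> = (\<Sum>x\<in>?S. (- c) * (\<pi> x * (?L x)\<^sup>2)) + (\<Sum>x\<in>?S. K * \<pi> x)"
    by (subst sum.distrib[symmetric]) (intro sum.cong, auto simp: algebra_simps)
  also have "\<dots> = - c * (\<Sum>x\<in>?S. \<pi> x * (?L x)\<^sup>2) + K"
    by (simp only: sum_distrib_left[symmetric] psum)
  finally have EL: "(\<Sum>x\<in>?S. \<pi> x * (?L x)\<^sup>2) \<le> K / c" using cpos by (simp add: field_simps)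
  have "exp_sq_dist N b \<pi> y \<le> (\<Sum>x\<in>?S. \<pi> x * (2 * (?L x)\<^sup>2 / P\<^sup>2 + (real b)\<^sup>2 * e\<^sup>2 / 2))"
    unfolding exp_sq_dist_def
  proof (intro sum_mono mult_left_mono pnn)
    fix x
    show "(\<Sum>k\<in>{1..b}. (x k - y k)\<^sup>2) \<le> 2 * (?L x)\<^sup>2 / P\<^sup>2 + (real b)\<^sup>2 * e\<^sup>2 / 2"
    proof (rule sq_pt)
      show "P > 0" using P1 by simp
      show "e > 0" by (rule epos)
      fix k assume "k \<in> {1..b}" thus "v k \<ge> P" unfolding v_def P_def by (rule vw_ge[OF b ys])
    qed
  qed
  also have "\<dots> = (\<Sum>x\<in>?S. (2 / P\<^sup>2) * (\<pi> x * (?L x)\<^sup>2)) + (\<Sum>x\<in>?S. ((real b)\<^sup>2 * e\<^sup>2 / 2) * \<pi> x)"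
    by (subst sum.distrib[symmetric]) (intro sum.cong, auto simp: algebra_simps)
  also have "\<dots> = 2 / P\<^sup>2 * (\<Sum>x\<in>?S. \<pi> x * (?L x)\<^sup>2) + (real b)\<^sup>2 * e\<^sup>2 / 2"
    by (simp only: sum_distrib_left[symmetric] psum)
  also have "\<dots> \<le> 2 / P\<^sup>2 * (K / c) + (real b)\<^sup>2 * e\<^sup>2 / 2"
    using EL P1 by (intro add_right_mono mult_left_mono) auto
  also have "\<dots> = 2 * ((16 * SV\<^sup>2 * ((real b + 1) * V)\<^sup>2 + 2 * SV2 * ((real b + 1) * V)) / real N) / P\<^sup>2
        + (real b)\<^sup>2 / (2 * real N)"
  proof -
    have e2: "e\<^sup>2 = 1 / real N" unfolding e_def using N by (simp add: power_divide)
    have e3: "3 * e + (1 / real N) / e = 4 * e"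
    proof -
      have "(1 / real N) / e = e" unfolding e_def using N
        by (simp add: field_simps)
      thus ?thesis by simp
    qed
    define ic where "ic = (real b + 1) * V"
    have icp: "ic > 0" unfolding ic_def using Vpos by simp
    have cc: "c = 1 / ic" unfolding c_def ic_def ..
    have sq: "(4 * e * SV)\<^sup>2 = 16 * SV\<^sup>2 / real N" using e2 by (simp add: power_mult_distrib)
    have "K / c = (16 * SV\<^sup>2 / real N / (1 / ic) + 2 * SV2 / real N) / (1 / ic)"
      unfolding K_def e3 sq cc ..
    also have "\<dots> = (16 * SV\<^sup>2 * ((real b + 1) * V)\<^sup>2 + 2 * SV2 * ((real b + 1) * V)) / real N"
      unfolding ic_def[symmetric] using icp N by (simp add: field_simps power2_eq_square)
    finally show ?thesis using e2 by (simp add: field_simps)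
  qed
  also have "\<dots> \<le> 148 * real b ^ 8 * P\<^sup>2 / real N"
  proof (rule numeric)
    show "real b \<ge> 1" using b by simp
    show "real N > 0" using N by simp
    show "P \<ge> 1" by (rule P1)
    show "P \<le> V" by (rule PV)
    show "V \<le> real b * P" by (rule VP)
    show "0 \<le> SV" unfolding SV_def by (intro sum_nonneg vnn)
    show "0 \<le> SV2" unfolding SV2_def by (intro sum_nonneg) simp
    have vV: "v k \<le> V" if "k \<in> {1..b}" for k unfolding v_def V_def using vw_mono[OF b ys, of k] that by simp
    show "SV \<le> real b * V"
    proof -
      have "SV \<le> (\<Sum>k\<in>{1..b}. V)" unfolding SV_def by (intro sum_mono vV)
      thus ?thesis by simp
    qed
    show "SV2 \<le> real b * V\<^sup>2"
    proof -
      have "SV2 \<le> (\<Sum>k\<in>{1..b}. V\<^sup>2)" unfolding SV2_def using vV vnn by (intro sum_mono power_mono) auto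
      thus ?thesis by simp
    qed
  qed
  finally show ?thesis unfolding P_def .
qed

lemma P_bound:
  fixes bb :: nat and l X :: real and y :: "nat \<Rightarrow> real"
  assumes bb: "bb \<ge> 1" and fp: "is_fixed_point bb l y" and l0: "0 \<le> l" and l1: "l < 1"
    and X: "X = 1 / (1 - l)"
  shows "dl bb y 1 \<le> 2 * exp 3 * X"
proof -
  have ys: "y \<in> simplexS bb" using fp unfolding is_fixed_point_def by auto
  have Xge: "X \<ge> 1" unfolding X using l0 l1 by (simp add: field_simps)
  have th: "(1 + 1 / real bb) ^ (bb - 1) \<le> exp 1"
  proof -
    have "(1 + 1 / real bb) ^ (bb - 1) \<le> (1 + 1 / real bb) ^ bb" by (intro power_increasing) auto
    also have "\<dots> \<le> exp (1 / real bb) ^ bb" by (intro power_mono exp_ge_add_one_self[THEN order_trans]) auto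
    also have "\<dots> = exp (real bb * (1 / real bb))" by (rule exp_of_nat_mult[symmetric])
    also have "\<dots> = exp 1" using bb by simp
    finally show ?thesis .
  qed
  have pr: "(\<Prod>i\<in>{1..<bb}. 1 + ext bb y i) \<le> exp 2 * (2 * X)"
  proof (rule prod_bound)
    show "\<And>i. 0 \<le> ext bb y i" by (rule ext_nonneg[OF ys])
    show "\<And>i. ext bb y i \<le> 1" by (rule ext_le1[OF ys])
    show "\<And>i. ext bb y (Suc i) \<le> ext bb y i" by (rule ext_Suc_le[OF ys])
    show "X \<ge> 1/2" using Xge by simp
    fix i assume i: "i \<in> {1..<bb}"
    show "ext bb y (Suc i) \<le> (ext bb y i)\<^sup>2"
      using fp_props(1)[OF fp l0 less_imp_le[OF l1], of "Suc i"] i by simp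
    assume half: "ext bb y i > 1/2"
    show "2 ^ (i - 1) < X"
    proof (rule ccontr)
      assume "\<not> 2 ^ (i - 1) < X"
      hence nX: "real (2 ^ (i - 1)) \<ge> X" by simp
      have "real (2 ^ (i - 1)) * (1 - l) \<ge> X * (1 - l)" using nX l1 by (intro mult_right_mono) auto
      moreover have "X * (1 - l) = 1" unfolding X using l1 by simp
      ultimately have n1: "real (2 ^ (i - 1)) * (1 - l) \<ge> 1" by simp
      have b: "l ^ (2 ^ (i - 1)) * (1 + real (2 ^ (i - 1)) * (1 - l)) \<le> 1"
        by (rule bern) (use l0 l1 in auto)
      have "l ^ (2 ^ (i - 1)) * 2 \<le> l ^ (2 ^ (i - 1)) * (1 + real (2 ^ (i - 1)) * (1 - l))"
        using n1 l0 by (intro mult_left_mono) auto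
      hence lh: "l ^ (2 ^ (i - 1)) \<le> 1/2" using b by simp
      have "ext bb y i \<le> l ^ (2 ^ (i - 1))" using fp_pow[OF fp l0 less_imp_le[OF l1]] i by simp
      thus False using lh half by simp
    qed
  qed
  have "dl bb y 1 = (1 + 1 / real bb) ^ (bb - 1) * (\<Prod>i\<in>{1..<bb}. 1 + ext bb y i)"
    unfolding dl_def ..
  also have "\<dots> \<le> exp 1 * (exp 2 * (2 * X))"
  proof -
    have pn: "0 \<le> (\<Prod>i\<in>{1..<bb}. 1 + ext bb y i)"
    proof (rule prod_nonneg)
      fix i show "0 \<le> 1 + ext bb y i" using ext_nonneg[OF ys, of i] by linarith
    qed
    show ?thesis by (rule mult_mono[OF th pr _ pn]) simp
  qed
  also have "\<dots> = 2 * exp 3 * X"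
  proof -
    have "exp 1 * exp 2 = exp (1 + 2::real)" by (rule exp_add[symmetric])
    hence "exp 1 * exp 2 = exp (3::real)" by simp
    thus ?thesis by (simp add: algebra_simps)
  qed
  finally show ?thesis .
qed

lemma fixedN:
  fixes \<gamma> \<alpha> \<xi> C :: real and N bb :: nat and \<pi> y
  assumes g0: "0 < \<gamma>" and g1: "\<gamma> \<le> 1" and a0: "0 < \<alpha>" and N: "N \<ge> 1" and bb: "bb \<ge> 1"
    and C: "C > 0" and bC: "real bb \<le> C * ln (real N)"
    and A: "592 * exp 6 * C ^ 8 / \<gamma>\<^sup>2 * (ln (real N)) ^ 8 \<le> real N powr (7 * \<xi>)"
    and st: "is_stationary N bb (lam \<gamma> \<alpha> N) \<pi>" and fp: "is_fixed_point bb (lam \<gamma> \<alpha> N) y"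
  shows "exp_sq_dist N bb \<pi> y \<le> 1 / real N powr (1 - 4 * \<alpha> - 7 * \<xi>)"
proof -
  define l where "l = lam \<gamma> \<alpha> N"
  define Na where "Na = real N powr \<alpha>"
  define P where "P = dl bb y 1"
  define X where "X = Na / \<gamma>"
  have Npos: "real N > 0" using N by simp
  have Na1: "Na \<ge> 1" unfolding Na_def using N a0 by (intro ge_one_powr_ge_zero) auto
  have ld: "l = 1 - \<gamma> / Na" unfolding l_def lam_def Na_def ..
  have gNa: "\<gamma> / Na \<le> 1" using Na1 g1 g0 by (simp add: divide_le_eq)
  have gNa0: "\<gamma> / Na > 0" using Na1 g0 by simp
  have l0: "0 \<le> l" using ld gNa by simp
  have l1: "l < 1" using ld gNa0 by simp
  have Xd: "X = 1 / (1 - l)" unfolding X_def ld using g0 Na1 by simp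
  have E: "exp_sq_dist N bb \<pi> y \<le> 148 * real bb ^ 8 * P\<^sup>2 / real N"
    unfolding P_def using exp_main[OF N bb l0 less_imp_le[OF l1]] st fp unfolding l_def by blast
  have P1: "P \<ge> 1" unfolding P_def by (rule dl_ge1[OF bb]) (use fp in \<open>auto simp: is_fixed_point_def\<close>)
  have PX: "P \<le> 2 * exp 3 * X" unfolding P_def
    by (rule P_bound[OF bb _ l0 l1 Xd]) (use fp in \<open>simp add: l_def\<close>)
  have P2: "P\<^sup>2 \<le> (2 * exp 3 * X)\<^sup>2" using PX P1 by (intro power_mono) auto
  have lnN: "ln (real N) \<ge> 0" using N by simp
  have b8: "real bb ^ 8 \<le> (C * ln (real N)) ^ 8" using bC by (intro power_mono) auto
  have "148 * real bb ^ 8 * P\<^sup>2 \<le> 148 * (C * ln (real N)) ^ 8 * (2 * exp 3 * X)\<^sup>2"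
    using b8 P2 by (intro mult_mono mult_left_mono) auto
  also have "\<dots> = (592 * exp 6 * C ^ 8 / \<gamma>\<^sup>2 * (ln (real N)) ^ 8) * Na\<^sup>2"
  proof -
    have e6: "(exp 3)\<^sup>2 = exp (6::real)"
    proof -
      have "(exp 3)\<^sup>2 = exp (3::real) * exp 3" by (simp add: power2_eq_square)
      also have "\<dots> = exp (3 + 3)" by (rule exp_add[symmetric])
      finally show ?thesis by simp
    qed
    show ?thesis unfolding X_def using g0
      by (simp add: power_mult_distrib power_divide e6[symmetric] field_simps)
  qed
  also have "\<dots> \<le> real N powr (7 * \<xi>) * Na\<^sup>2" using A by (intro mult_right_mono) auto
  finally have F: "148 * real bb ^ 8 * P\<^sup>2 \<le> real N powr (7 * \<xi>) * Na\<^sup>2" .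
  have "148 * real bb ^ 8 * P\<^sup>2 / real N \<le> real N powr (7 * \<xi>) * Na\<^sup>2 / real N"
    using F Npos by (intro divide_right_mono) auto
  also have "\<dots> = real N powr (7 * \<xi> + 2 * \<alpha> - 1)"
  proof -
    have "Na\<^sup>2 = real N powr (2 * \<alpha>)" unfolding Na_def power2_eq_square powr_add[symmetric] by simp
    moreover have "real N = real N powr 1" using Npos by simp
    ultimately have "real N powr (7 * \<xi>) * Na\<^sup>2 / real N = real N powr (7 * \<xi>) * real N powr (2 * \<alpha>) / real N powr 1"
      by simp
    also have "\<dots> = real N powr (7 * \<xi> + 2 * \<alpha> - 1)" by (simp add: powr_add powr_diff)
    finally show ?thesis .
  qed
  also have "\<dots> \<le> real N powr (- (1 - 4 * \<alpha> - 7 * \<xi>))" using N a0 by (intro powr_mono) auto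
  also have "\<dots> = 1 / real N powr (1 - 4 * \<alpha> - 7 * \<xi>)" by (rule powr_minus_divide)
  finally show ?thesis using E by simp
qed

theorem lemma1:
  fixes \<gamma> \<alpha> \<xi> :: real and b :: "nat \<Rightarrow> nat"
  assumes "0 < \<gamma>" "\<gamma> \<le> 1" "0 < \<alpha>" "\<alpha> < 0.25" "0 < \<xi>"
    and "\<forall>N. 1 \<le> b N"
    and "(\<lambda>N. real (b N)) \<in> O(\<lambda>N. ln (real N))"
  shows "\<forall>\<^sub>F N in sequentially. \<forall>\<pi> sstar.
           is_stationary N (b N) (lam \<gamma> \<alpha> N) \<pi> \<and>
           is_fixed_point (b N) (lam \<gamma> \<alpha> N) sstar \<longrightarrow>
           exp_sq_dist N (b N) \<pi> sstar \<le> 1 / real N powr (1 - 4 * \<alpha> - 7 * \<xi>)"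
proof -
  obtain C where C: "C > 0" and evC: "eventually (\<lambda>N. norm (real (b N)) \<le> C * norm (ln (real N))) at_top"
    using landau_o.bigE[OF assms(7)] by blast
  define A where "A = 592 * exp 6 * C ^ 8 / \<gamma>\<^sup>2"
  have x7: "7 * \<xi> > 0" using assms(5) by simp
  have evR: "eventually (\<lambda>x::real. A * ln x ^ 8 \<le> x powr (7 * \<xi>)) at_top"
    using x7 by real_asymp
  have evA: "eventually (\<lambda>N. A * ln (real N) ^ 8 \<le> real N powr (7 * \<xi>)) sequentially"
    using filterlim_real_sequentially evR unfolding filterlim_iff by blast
  have evN: "eventually (\<lambda>N::nat. N \<ge> 1) sequentially" by (rule eventually_ge_at_top)
  show ?thesis using evC evA evN
  proof eventually_elim
    case (elim N)
    have N: "N \<ge> 1" using elim(3) .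
    have lnN: "ln (real N) \<ge> 0" using N by simp
    have bC: "real (b N) \<le> C * ln (real N)" using elim(1) lnN by simp
    show ?case
    proof (intro allI impI)
      fix \<pi> sstar
      assume h: "is_stationary N (b N) (lam \<gamma> \<alpha> N) \<pi> \<and> is_fixed_point (b N) (lam \<gamma> \<alpha> N) sstar"
      show "exp_sq_dist N (b N) \<pi> sstar \<le> 1 / real N powr (1 - 4 * \<alpha> - 7 * \<xi>)"
      proof (rule fixedN[OF assms(1,2,3) N _ C bC])
        show "1 \<le> b N" using assms(6) by blast
        show "592 * exp 6 * C ^ 8 / \<gamma>\<^sup>2 * ln (real N) ^ 8 \<le> real N powr (7 * \<xi>)"
          using elim(2) unfolding A_def .
      qed (use h in auto)
    qed
  qed
qed

end
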